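(* Let $\mathcal A$ be a $C^*$-algebra with identity $1$ and $\delta\colon\mathcal A\to\mathcal A$ a $^*$-endomorphism. The following are equivalent: 1) there exists a complete transfer operator $\delta_*$ for $(\mathcal A,\delta)$; 2) (i) there exists a non-degenerate transfer operator $\delta_*$ for $(\mathcal A,\delta)$, and (ii) $\delta(\mathcal A)$ is a hereditary subalgebra of $\mathcal A$; 3) (i) there exists a central orthogonal projection $P\in\mathcal A$ such that (a) $\delta(P)=\delta(1)$ and (b) the restriction $\delta\colon P\mathcal A\to\delta(\mathcal A)$ is a $^*$-isomorphism; and (ii) $\delta(\mathcal A)=\delta(1)\mathcal A\delta(1)$. Moreover, the transfer operator $\delta_*$ in 1) and in 2) is unique, the projection $P$ in 3) is unique, $P=\delta_*(1)$, and $\delta_*(a)=\delta^{-1}(\delta(1)a\delta(1))$ for all $a\in\mathcal A$, where $\delta^{-1}\colon\delta(\mathcal A)\to P\mathcal A$ is the inverse of the $^*$-isomorphism $\delta\colon P\mathcal A\to\delta(\mathcal A)$.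
   Context: A transfer operator for $(\mathcal A,\delta)$ is a continuous positive linear map $\delta_*\colon\mathcal A\to\mathcal A$ such that $\delta_*(\delta(a)b)=a\,\delta_*(b)$ for all $a,b\in\mathcal A$. It is non-degenerate if $\delta(\delta_*(1))=\delta(1)$ (equivalently $\delta\circ\delta_*\circ\delta=\delta$). It is complete if $\delta(\delta_*(a))=\delta(1)a\delta(1)$ for all $a\in\mathcal A$. *)

theory Defs
  imports Complex_Main
begin

class cstar_algebra = banach + real_normed_algebra + ring_1 +
  fixes scaleC :: "complex \<Rightarrow> 'a \<Rightarrow> 'a"
    and cstar :: "'a \<Rightarrow> 'a"
  assumes scaleC_add_right: "scaleC c (x + y) = scaleC c x + scaleC c y"
    and scaleC_add_left: "scaleC (c + d) x = scaleC c x + scaleC d x"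
    and scaleC_scaleC: "scaleC c (scaleC d x) = scaleC (c * d) x"
    and scaleC_one: "scaleC 1 x = x"
    and scaleR_scaleC: "scaleR r x = scaleC (complex_of_real r) x"
    and norm_scaleC: "norm (scaleC c x) = cmod c * norm x"
    and mult_scaleC_left: "scaleC c x * y = scaleC c (x * y)"
    and mult_scaleC_right: "x * scaleC c y = scaleC c (x * y)"
    and cstar_cstar: "cstar (cstar x) = x"
    and cstar_add: "cstar (x + y) = cstar x + cstar y"
    and cstar_scaleC: "cstar (scaleC c x) = scaleC (cnj c) (cstar x)"
    and cstar_mult: "cstar (x * y) = cstar y * cstar x"
    and cstar_identity: "norm (cstar x * x) = (norm x)\<^sup>2"

definition cstar_invertible :: "'a::cstar_algebra \<Rightarrow> bool" where
  "cstar_invertible x \<longleftrightarrow> (\<exists>y. x * y = 1 \<and> y * x = 1)"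

definition cstar_spectrum :: "'a::cstar_algebra \<Rightarrow> complex set" where
  "cstar_spectrum a = {z. \<not> cstar_invertible (a - scaleC z 1)}"

definition cstar_positive :: "'a::cstar_algebra \<Rightarrow> bool" where
  "cstar_positive a \<longleftrightarrow> cstar a = a \<and> cstar_spectrum a \<subseteq> complex_of_real ` {0..}"

definition clinear_map :: "('a::cstar_algebra \<Rightarrow> 'a) \<Rightarrow> bool" where
  "clinear_map f \<longleftrightarrow> (\<forall>x y. f (x + y) = f x + f y) \<and> (\<forall>c x. f (scaleC c x) = scaleC c (f x))"

definition star_endomorphism :: "('a::cstar_algebra \<Rightarrow> 'a) \<Rightarrow> bool" where
  "star_endomorphism d \<longleftrightarrow> clinear_map d \<and> (\<forall>x y. d (x * y) = d x * d y)
      \<and> (\<forall>x. d (cstar x) = cstar (d x))"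

definition transfer_operator :: "('a::cstar_algebra \<Rightarrow> 'a) \<Rightarrow> ('a::cstar_algebra \<Rightarrow> 'a) \<Rightarrow> bool" where
  "transfer_operator d T \<longleftrightarrow> continuous_on UNIV T \<and> clinear_map T
      \<and> (\<forall>a. cstar_positive a \<longrightarrow> cstar_positive (T a))
      \<and> (\<forall>a b. T (d a * b) = a * T b)"

definition nondegenerate_transfer_operator :: "('a::cstar_algebra \<Rightarrow> 'a) \<Rightarrow> ('a::cstar_algebra \<Rightarrow> 'a) \<Rightarrow> bool" where
  "nondegenerate_transfer_operator d T \<longleftrightarrow> transfer_operator d T \<and> d (T 1) = d 1"

definition complete_transfer_operator :: "('a::cstar_algebra \<Rightarrow> 'a) \<Rightarrow> ('a::cstar_algebra \<Rightarrow> 'a) \<Rightarrow> bool" where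
  "complete_transfer_operator d T \<longleftrightarrow> transfer_operator d T \<and> (\<forall>a. d (T a) = d 1 * a * d 1)"

text \<open>C*-subalgebra: closed *-subalgebra (not necessarily containing 1).\<close>
definition cstar_subalgebra ::"'a::cstar_algebra set \<Rightarrow> bool" where
  "cstar_subalgebra B \<longleftrightarrow> closed B \<and> 0 \<in> B \<and> (\<forall>x\<in>B. \<forall>y\<in>B. x + y \<in> B \<and> x * y \<in> B)
      \<and> (\<forall>c. \<forall>x\<in>B. scaleC c x \<in> B) \<and> (\<forall>x\<in>B. cstar x \<in> B)"

definition hereditary_subalgebra ::"'a::cstar_algebra set \<Rightarrow> bool" where
  "hereditary_subalgebra B \<longleftrightarrow> cstar_subalgebra B
      \<and> (\<forall>a b. b \<in> B \<and> cstar_positive a \<and> cstar_positive (b - a) \<longrightarrow> a \<in> B)"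

definition central_projection :: "'a::cstar_algebra \<Rightarrow> bool" where
  "central_projection P \<longleftrightarrow> cstar P = P \<and> P * P = P \<and> (\<forall>a. P * a = a * P)"

text \<open>Condition 3(i): P central projection, d P = d 1, and the restriction of d to P A
  is a bijection onto d(A) (being the restriction of a *-homomorphism, this is a *-isomorphism).\<close>
definition cond3i :: "('a::cstar_algebra \<Rightarrow> 'a) \<Rightarrow> 'a::cstar_algebra \<Rightarrow> bool" where
  "cond3i d P \<longleftrightarrow> central_projection P \<and> d P = d 1 \<and> bij_betw d (range (\<lambda>a. P * a)) (range d)"

end

theory Submission
  imports Defs "HOL-Analysis.Analysis"
begin

lemma cstar_one_aux: "cstar (1::'a::cstar_algebra) = 1"
proof -
  have e: "cstar (cstar (1::'a)) = 1" by (rule cstar_cstar)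
  have "cstar (1::'a) = cstar 1 * cstar (cstar 1)" by (simp only: e mult.right_neutral)
  also have "\<dots> = cstar (cstar 1 * 1)" by (rule cstar_mult[symmetric])
  also have "\<dots> = 1" by (simp add: cstar_cstar)
  finally show ?thesis .
qed

instance cstar_algebra \<subseteq> real_normed_algebra_1
proof
  have "norm (1::'a) = (norm (1::'a))\<^sup>2" using cstar_identity[of "1::'a"] by (simp add: cstar_one_aux)
  moreover have "norm (1::'a) \<noteq> 0" by simp
  ultimately show "norm (1::'a) = 1" by (simp add: power2_eq_square)
qed


lemma cstar_zero[simp]: "cstar (0::'a::cstar_algebra) = 0"
  by (metis add_cancel_right_right cstar_add)
lemma cstar_one[simp]: "cstar (1::'a::cstar_algebra) = 1" by (rule cstar_one_aux)
lemma cstar_minus[simp]: "cstar (- x::'a::cstar_algebra) = - cstar x"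
  by (metis add_eq_0_iff cstar_add cstar_zero)
lemma cstar_diff[simp]: "cstar (x - y::'a::cstar_algebra) = cstar x - cstar y"
  by (metis cstar_add cstar_minus diff_conv_add_uminus)
lemma cstar_cstar'[simp]: "cstar (cstar x) = (x::'a::cstar_algebra)" by (rule cstar_cstar)
lemma cstar_eq_iff[simp]: "cstar x = cstar y \<longleftrightarrow> (x::'a::cstar_algebra) = y"
  by (metis cstar_cstar)
lemma cstar_eq_0_iff[simp]: "cstar x = 0 \<longleftrightarrow> (x::'a::cstar_algebra) = 0"
  by (metis cstar_cstar cstar_zero)

lemma scaleC_zero_left[simp]: "scaleC 0 (x::'a::cstar_algebra) = 0"
  by (metis add_cancel_right_right add_0 scaleC_add_left)
lemma scaleC_zero_right[simp]: "scaleC c (0::'a::cstar_algebra) = 0"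
  by (metis add_cancel_right_right add_0 scaleC_add_right)
lemma scaleC_minus_left: "scaleC (- c) (x::'a::cstar_algebra) = - scaleC c x"
  by (metis add_eq_0_iff neg_eq_iff_add_eq_0 scaleC_add_left scaleC_zero_left add.right_inverse)
lemma scaleC_minus_right: "scaleC c (- x::'a::cstar_algebra) = - scaleC c x"
  by (metis add_eq_0_iff scaleC_add_right scaleC_zero_right)
lemma scaleC_diff_left: "scaleC (c - d) (x::'a::cstar_algebra) = scaleC c x - scaleC d x"
  by (metis diff_conv_add_uminus scaleC_add_left scaleC_minus_left)
lemma scaleC_diff_right: "scaleC c (x - y::'a::cstar_algebra) = scaleC c x - scaleC c y"
  by (metis diff_conv_add_uminus scaleC_add_right scaleC_minus_right)
lemma scaleC_real: "scaleC (complex_of_real r) (x::'a::cstar_algebra) = scaleR r x"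
  by (simp add: scaleR_scaleC)
lemma scaleC_one'[simp]: "scaleC 1 (x::'a::cstar_algebra) = x" by (rule scaleC_one)
lemma scaleC_scaleC'[simp]: "scaleC c (scaleC d (x::'a::cstar_algebra)) = scaleC (c*d) x" by (rule scaleC_scaleC)
lemma mult_scaleC_left'[simp]: "scaleC c (x::'a::cstar_algebra) * y = scaleC c (x * y)" by (rule mult_scaleC_left)
lemma mult_scaleC_right'[simp]: "(x::'a::cstar_algebra) * scaleC c y = scaleC c (x * y)" by (rule mult_scaleC_right)
lemma scaleC_eq_0_iff: "scaleC c (x::'a::cstar_algebra) = 0 \<longleftrightarrow> c = 0 \<or> x = 0"
  by (metis norm_scaleC mult_eq_0_iff norm_eq_zero scaleC_zero_left) 
lemma cstar_scaleR[simp]: "cstar (scaleR r (x::'a::cstar_algebra)) = scaleR r (cstar x)"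
  by (simp add: scaleR_scaleC cstar_scaleC)
lemma norm_cstar[simp]: "norm (cstar (x::'a::cstar_algebra)) = norm x"
proof -
  have le: "norm y \<le> norm (cstar y)" for y :: 'a
  proof -
    have "(norm y)\<^sup>2 \<le> norm (cstar y) * norm y" using cstar_identity[of y] norm_mult_ineq[of "cstar y" y] by simp
    then show ?thesis
      by (cases "norm y = 0") (auto simp: power2_eq_square)
  qed
  show ?thesis using le[of x] le[of "cstar x"] by simp
qed
lemma scaleC_1_mult: "scaleC c 1 * (x::'a::cstar_algebra) = scaleC c x" by simp
lemma mult_scaleC_1: "(x::'a::cstar_algebra) * scaleC c 1 = scaleC c x" by simp

definition inv_of :: "'a::cstar_algebra \<Rightarrow> 'a" where
  "inv_of x = (SOME y. x * y = 1 \<and> y * x = 1)"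

lemma inv_of: assumes "cstar_invertible x" shows "x * inv_of x = 1" "inv_of x * x = 1"
  using someI_ex[of "\<lambda>y. x * y = 1 \<and> y * x = 1"] assms
  unfolding cstar_invertible_def inv_of_def by auto

lemma inv_unique: "(x::'a::cstar_algebra) * y = 1 \<Longrightarrow> z * x = 1 \<Longrightarrow> y = z"
  by (metis mult.assoc mult_1_left mult_1_right)

lemma invertibleI: "(x::'a::cstar_algebra) * y = 1 \<Longrightarrow> y * x = 1 \<Longrightarrow> cstar_invertible x"
  unfolding cstar_invertible_def by blast

lemma invertible_mult: "cstar_invertible x \<Longrightarrow> cstar_invertible y \<Longrightarrow> cstar_invertible (x * (y::'a::cstar_algebra))"
  unfolding cstar_invertible_def
  by (metis mult.assoc mult_1_left)

lemma invertible_scaleC: "c \<noteq> 0 \<Longrightarrow> cstar_invertible (x::'a::cstar_algebra) \<Longrightarrow> cstar_invertible (scaleC c x)"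
  unfolding cstar_invertible_def
  apply clarify
  subgoal for y by (rule exI[of _ "scaleC (inverse c) y"]) simp
  done

lemma invertible_scaleC_iff: "c \<noteq> 0 \<Longrightarrow> cstar_invertible (scaleC c (x::'a::cstar_algebra)) \<longleftrightarrow> cstar_invertible x"
  using invertible_scaleC[of c x] invertible_scaleC[of "inverse c" "scaleC c x"] by auto

lemma invertible_one[simp]: "cstar_invertible (1::'a::cstar_algebra)"
  by (rule invertibleI[of 1 1]) simp_all

lemma inv_commute: assumes "cstar_invertible x" "x * p = p * (x::'a::cstar_algebra)"
  shows "inv_of x * p = p * inv_of x"
proof -
  have "inv_of x * p = inv_of x * (p * x) * inv_of x" using inv_of[OF assms(1)] by (simp add: mult.assoc)
  also have "\<dots> = inv_of x * (x * p) * inv_of x" using assms(2) by simp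
  also have "\<dots> = p * inv_of x" using inv_of[OF assms(1)] by (simp add: mult.assoc[symmetric])
  finally show ?thesis .
qed

lemma invertible_cstar: "cstar_invertible (x::'a::cstar_algebra) \<Longrightarrow> cstar_invertible (cstar x)"
  unfolding cstar_invertible_def by (metis cstar_mult cstar_one)

lemma neumann:
  fixes e :: "'a::cstar_algebra"
  assumes "norm e < 1"
  shows "cstar_invertible (1 - e)" "norm (inv_of (1 - e)) \<le> 1 / (1 - norm e)"
    "norm (inv_of (1 - e) - 1) \<le> norm e / (1 - norm e)"
proof -
  have sn: "summable (\<lambda>n. norm e ^ n)" using assms by (simp add: summable_geometric)
  have s: "summable (\<lambda>n. e ^ n)"
    by (rule summable_comparison_test[OF _ sn]) (auto intro: exI[of _ 0] simp: norm_power_ineq)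
  define S where "S = (\<Sum>n. e ^ n)"
  have lim: "(\<lambda>n. e ^ n) \<longlonglongrightarrow> 0"
    using summable_LIMSEQ_zero[OF s] .
  have t1: "(\<lambda>n. e ^ n - e ^ Suc n) sums (1 - 0)"
    using telescope_sums'[OF lim] by simp
  have "(\<lambda>n. (1 - e) * e ^ n) sums ((1 - e) * S)" unfolding S_def by (rule sums_mult[OF summable_sums[OF s]])
  moreover have "(\<lambda>n. (1 - e) * e ^ n) = (\<lambda>n. e ^ n - e ^ Suc n)" by (auto simp: algebra_simps)
  ultimately have l: "(1 - e) * S = 1" using t1 sums_unique2 by fastforce
  have "(\<lambda>n. e ^ n * (1 - e)) sums (S * (1 - e))" unfolding S_def by (rule sums_mult2[OF summable_sums[OF s]])
  moreover have "(\<lambda>n. e ^ n * (1 - e)) = (\<lambda>n. e ^ n - e ^ Suc n)" by (auto simp: algebra_simps power_commutes)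
  ultimately have r: "S * (1 - e) = 1" using t1 sums_unique2 by fastforce
  show inv: "cstar_invertible (1 - e)" using l r by (rule invertibleI)
  have SS: "inv_of (1 - e) = S" using inv_unique[OF inv_of(1)[OF inv] r] .
  have "norm S \<le> (\<Sum>n. norm e ^ n)" unfolding S_def
    by (rule norm_suminf_le[OF _ sn]) (simp add: norm_power_ineq)
  also have "\<dots> = 1 / (1 - norm e)" using assms by (simp add: suminf_geometric)
  finally show "norm (inv_of (1 - e)) \<le> 1 / (1 - norm e)" using SS by simp
  have "S - 1 = e * S" using l by (simp add: algebra_simps)
  then have "norm (S - 1) \<le> norm e * norm S" by (simp add: norm_mult_ineq)
  also have "\<dots> \<le> norm e * (1 / (1 - norm e))"
    using \<open>norm S \<le> _\<close> \<open>_ = 1 / (1 - norm e)\<close> by (intro mult_left_mono) auto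
  finally show "norm (inv_of (1 - e) - 1) \<le> norm e / (1 - norm e)" using SS by simp
qed

lemma spec_iff: "z \<in> cstar_spectrum x \<longleftrightarrow> \<not> cstar_invertible (x - scaleC z 1)"
  by (simp add: cstar_spectrum_def)

lemma spec_norm: assumes "z \<in> cstar_spectrum (x::'a::cstar_algebra)" shows "cmod z \<le> norm x"
proof (rule ccontr)
  assume "\<not> cmod z \<le> norm x"
  then have lt: "norm x < cmod z" by simp
  then have z0: "z \<noteq> 0" by auto
  have "norm (scaleC (inverse z) x) = norm x / cmod z" by (simp add: norm_scaleC norm_inverse divide_inverse_commute)
  also have "\<dots> < 1" using lt z0 by simp
  finally have "cstar_invertible (1 - scaleC (inverse z) x)" by (rule neumann)
  then have "cstar_invertible (scaleC (- z) (1 - scaleC (inverse z) x))"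
    using z0 by (simp add: invertible_scaleC)
  moreover have "scaleC (- z) (1 - scaleC (inverse z) x) = x - scaleC z 1"
    using z0 by (simp add: scaleC_diff_right scaleC_minus_left)
  ultimately show False using assms by (simp add: spec_iff)
qed

lemma selfadj_spec_real:
  assumes sa: "cstar h = (h::'a::cstar_algebra)" and z: "z \<in> cstar_spectrum h"
  shows "Im z = 0"
proof (rule ccontr)
  assume b: "Im z \<noteq> 0"
  define t where "t = ((norm h)\<^sup>2 + 1) / (2 * Im z)"
  have tt: "2 * Im z * t = (norm h)\<^sup>2 + 1" using b by (simp add: t_def)
  define y where "y = h + scaleC (\<i> * complex_of_real t) 1"
  have "y - scaleC (z + \<i> * complex_of_real t) 1 = h - scaleC z 1"
    by (simp add: y_def scaleC_add_left algebra_simps)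
  then have "z + \<i> * complex_of_real t \<in> cstar_spectrum y" using z by (simp add: spec_iff)
  then have n1: "cmod (z + \<i> * complex_of_real t) \<le> norm y" by (rule spec_norm)
  have cy: "cstar y = h - scaleC (\<i> * complex_of_real t) 1"
    by (simp add: y_def cstar_add cstar_scaleC sa scaleC_minus_left)
  have "cstar y * y = h * h + scaleR (t\<^sup>2) 1"
  proof -
    define w where "w = scaleC (\<i> * complex_of_real t) (1::'a)"
    have hw: "h * w = w * h" unfolding w_def by simp
    have ww: "w * w = - scaleR (t\<^sup>2) 1" unfolding w_def
    proof -
      have "\<i> * complex_of_real t * (\<i> * complex_of_real t) = - (complex_of_real t * complex_of_real t)"
        by (simp add: algebra_simps)
      then show "scaleC (\<i> * complex_of_real t) (1::'a) * scaleC (\<i> * complex_of_real t) 1 = - scaleR (t\<^sup>2) 1"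
        by (simp add: scaleR_scaleC power2_eq_square flip: scaleC_minus_left)
    qed
    have "cstar y * y = (h - w) * (h + w)" unfolding cy by (simp add: y_def w_def)
    also have "\<dots> = h * h + (h * w - w * h) - w * w" by (simp add: algebra_simps)
    also have "\<dots> = h * h + scaleR (t\<^sup>2) 1" using hw ww by simp
    finally show ?thesis .
  qed
  then have "(norm y)\<^sup>2 = norm (h * h + scaleR (t\<^sup>2) 1)" using cstar_identity[of y] by simp
  also have "\<dots> \<le> norm (h * h) + t\<^sup>2" by (rule order_trans[OF norm_triangle_ineq]) simp
  also have "norm (h * h) = (norm h)\<^sup>2" using cstar_identity[of h] sa by simp
  finally have n2: "(norm y)\<^sup>2 \<le> (norm h)\<^sup>2 + t\<^sup>2" .
  have "(cmod (z + \<i> * complex_of_real t))\<^sup>2 = (Re z)\<^sup>2 + (Im z + t)\<^sup>2"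
    by (simp add: cmod_power2)
  moreover have "(cmod (z + \<i> * complex_of_real t))\<^sup>2 \<le> (norm y)\<^sup>2"
    using n1 by (simp add: power_mono)
  ultimately have "(Re z)\<^sup>2 + (Im z + t)\<^sup>2 \<le> (norm h)\<^sup>2 + t\<^sup>2" using n2 by linarith
  then have "(Re z)\<^sup>2 + (Im z)\<^sup>2 + 2 * Im z * t \<le> (norm h)\<^sup>2" by (simp add: power2_eq_square algebra_simps)
  then show False using tt by (smt (verit) zero_le_power2)
qed

lemma spec_shift: "z \<in> cstar_spectrum x \<longleftrightarrow> z + c \<in> cstar_spectrum (x + scaleC c (1::'a::cstar_algebra))"
proof -
  have "x + scaleC c 1 - scaleC (z + c) 1 = x - scaleC z 1"
    by (simp only: scaleC_add_left) (simp add: algebra_simps)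
  then show ?thesis unfolding spec_iff by (simp only:)
qed

lemma invertible_neg: "cstar_invertible (- y) \<longleftrightarrow> cstar_invertible (y::'a::cstar_algebra)"
proof -
  have "cstar_invertible (- y)" if "cstar_invertible y" for y :: 'a
    using that unfolding cstar_invertible_def
    by (metis minus_mult_minus)
  from this[of y] this[of "-y"] show ?thesis by auto
qed

lemma spec_neg: "z \<in> cstar_spectrum x \<longleftrightarrow> - z \<in> cstar_spectrum (- (x::'a::cstar_algebra))"
proof -
  have "- x - scaleC (- z) 1 = - (x - scaleC z 1)" by (simp add: scaleC_minus_left)
  then show ?thesis unfolding spec_iff by (simp only: invertible_neg)
qed

lemma spec_scale: assumes "c \<noteq> 0"
  shows "z \<in> cstar_spectrum x \<longleftrightarrow> c * z \<in> cstar_spectrum (scaleC c (x::'a::cstar_algebra))"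
proof -
  have "scaleC c x - scaleC (c * z) 1 = scaleC c (x - scaleC z 1)" by (simp only: scaleC_diff_right scaleC_scaleC)
  then show ?thesis unfolding spec_iff by (simp only: invertible_scaleC_iff[OF assms])
qed

lemma spec_const: "z \<in> cstar_spectrum (scaleC c (1::'a::cstar_algebra)) \<Longrightarrow> z = c"
proof (rule ccontr)
  assume a: "z \<in> cstar_spectrum (scaleC c (1::'a))" "z \<noteq> c"
  have "scaleC c 1 - scaleC z (1::'a) = scaleC (c - z) 1" by (simp only: scaleC_diff_left)
  moreover have "cstar_invertible (scaleC (c - z) (1::'a))" using a(2) invertible_scaleC_iff[of "c - z" "1::'a"] by simp
  ultimately show False using a(1) unfolding spec_iff by simp
qed

lemma nonneg_iff: "z \<in> complex_of_real ` {0..} \<longleftrightarrow> Im z = 0 \<and> Re z \<ge> 0"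
  by (auto simp: image_iff complex_eq_iff intro!: bexI[of _ "Re z"])

lemma positiveI:
  assumes "cstar a = (a::'a::cstar_algebra)" "\<And>z. z \<in> cstar_spectrum a \<Longrightarrow> Im z = 0 \<and> Re z \<ge> 0"
  shows "cstar_positive a"
  using assms unfolding cstar_positive_def by (auto simp: nonneg_iff)

lemma positiveD:
  assumes "cstar_positive (a::'a::cstar_algebra)"
  shows "cstar a = a" "\<And>z. z \<in> cstar_spectrum a \<Longrightarrow> Im z = 0 \<and> Re z \<ge> 0"
  using assms unfolding cstar_positive_def by (auto simp: nonneg_iff)

lemma positive_shift: assumes "cstar h = (h::'a::cstar_algebra)" "norm h \<le> c"
  shows "cstar_positive (h + scaleR c 1)"
proof (rule positiveI)
  show "cstar (h + scaleR c 1) = h + scaleR c 1" using assms by (simp add: cstar_add)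
  fix z assume "z \<in> cstar_spectrum (h + scaleR c 1)"
  then have "z - complex_of_real c \<in> cstar_spectrum h"
    using spec_shift[of "z - complex_of_real c" h "complex_of_real c"] by (simp add: scaleC_real)
  then have "Im (z - complex_of_real c) = 0" "cmod (z - complex_of_real c) \<le> norm h"
    using selfadj_spec_real[OF assms(1)] spec_norm by blast+
  then show "Im z = 0 \<and> Re z \<ge> 0" using assms(2) abs_Re_le_cmod[of "z - complex_of_real c"] by auto
qed

lemma positive_const: assumes "c \<ge> 0" shows "cstar_positive (scaleR c (1::'a::cstar_algebra))"
proof (rule positiveI)
  show "cstar (scaleR c (1::'a)) = scaleR c 1" by simp
  fix z assume "z \<in> cstar_spectrum (scaleR c (1::'a))"
  then have "z = complex_of_real c" using spec_const[of z "complex_of_real c"] by (simp add: scaleC_real)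
  then show "Im z = 0 \<and> Re z \<ge> 0" using assms by simp
qed

lemma positive_scale: assumes "cstar_positive (a::'a::cstar_algebra)" "c \<ge> 0"
  shows "cstar_positive (scaleR c a)"
proof (cases "c = 0")
  case True then show ?thesis using positive_const[of 0] by simp
next
  case False
  show ?thesis
  proof (rule positiveI)
    show "cstar (scaleR c a) = scaleR c a" using positiveD(1)[OF assms(1)] by simp
    fix z assume z: "z \<in> cstar_spectrum (scaleR c a)"
    have e: "complex_of_real c * (inverse (complex_of_real c) * z) = z" using False by simp
    have "complex_of_real c * (inverse (complex_of_real c) * z) \<in> cstar_spectrum (scaleC (complex_of_real c) a)"
      unfolding e scaleC_real by (rule z)
    then have "inverse (complex_of_real c) * z \<in> cstar_spectrum a"
      using spec_scale[of "complex_of_real c" "inverse (complex_of_real c) * z" a] False by simp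
    then have "Im (inverse (complex_of_real c) * z) = 0 \<and> Re (inverse (complex_of_real c) * z) \<ge> 0"
      using positiveD(2)[OF assms(1)] by blast
    then show "Im z = 0 \<and> Re z \<ge> 0" using False assms(2)
      by (simp add: Im_divide Re_divide field_simps zero_le_divide_iff zero_le_mult_iff)
  qed
qed


lemma clinearD:
  assumes "clinear_map T"
  shows "T (x + y) = T x + T y" "T (scaleC c x) = scaleC c (T x)" "T (- x) = - T x"
    "T (x - y) = T x - T y" "T 0 = 0" "T (scaleR r x) = scaleR r (T x)"
proof -
  show a: "T (x + y) = T x + T y" "T (scaleC c x) = scaleC c (T x)" for x y c
    using assms unfolding clinear_map_def by auto
  show n: "T (- x) = - T x" for x
    using a(2)[of "-1" x] by (simp add: scaleC_minus_left)
  show "T (x - y) = T x - T y" using a(1)[of x "-y"] n[of y] by simp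
  show "T 0 = 0" using a(2)[of 0 0] by simp
  show "T (scaleR r x) = scaleR r (T x)" using a(2)[of "complex_of_real r" x] by (simp add: scaleC_real)
qed

lemma half_half: "scaleC (1/2) y + scaleC (1/2) y = (y::'a::cstar_algebra)"
  by (simp flip: scaleC_add_left)

lemma decomp_re_im:
  fixes x :: "'a::cstar_algebra"
  defines "h \<equiv> scaleR (1/2) (x + cstar x)" and "k \<equiv> scaleC (- \<i>/2) (x - cstar x)"
  shows "x = h + scaleC \<i> k" "cstar h = h" "cstar k = k" "cstar x = h - scaleC \<i> k"
proof -
  have h': "h = scaleC (1/2) x + scaleC (1/2) (cstar x)" unfolding h_def scaleR_scaleC
    by (simp add: scaleC_add_right)
  have ik: "scaleC \<i> k = scaleC (1/2) x - scaleC (1/2) (cstar x)" unfolding k_def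
    by (simp add: scaleC_diff_right)
  show 1: "x = h + scaleC \<i> k" unfolding h' ik
    using half_half[of x] by (simp add: algebra_simps)
  show 2: "cstar h = h" unfolding h_def by (simp add: cstar_add add.commute)
  have "cstar k = scaleC (\<i>/2) (cstar x - x)" unfolding k_def by (simp add: cstar_scaleC)
  also have "\<dots> = k" unfolding k_def
    using scaleC_minus_left[of "\<i>/2" "x - cstar x"] scaleC_minus_right[of "\<i>/2" "x - cstar x"]
    by simp
  finally show 3: "cstar k = k" .
  show "cstar x = h - scaleC \<i> k" unfolding h' ik
    using half_half[of "cstar x"] by (simp add: algebra_simps)
qed

lemma positive_map_selfadj:
  assumes lin: "clinear_map T" and pos: "\<forall>a. cstar_positive a \<longrightarrow> cstar_positive (T a)"
    and h: "cstar h = (h::'a::cstar_algebra)"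
  shows "cstar (T h) = T h"
proof -
  have p1: "cstar_positive (h + scaleR (norm h) 1)" by (rule positive_shift[OF h]) simp
  have p2: "cstar_positive (scaleR (norm h) (1::'a))" by (rule positive_const) simp
  have "T h = T (h + scaleR (norm h) 1) - T (scaleR (norm h) 1)" using clinearD[OF lin] by simp
  then show ?thesis using positiveD(1)[OF pos[rule_format, OF p1]] positiveD(1)[OF pos[rule_format, OF p2]]
    by simp
qed

lemma positive_map_cstar:
  assumes lin: "clinear_map T" and pos: "\<forall>a. cstar_positive a \<longrightarrow> cstar_positive (T a)"
  shows "T (cstar x) = cstar (T (x::'a::cstar_algebra))"
proof -
  define h where "h = scaleR (1/2) (x + cstar x)"
  define k where "k = scaleC (- \<i>/2) (x - cstar x)"
  note D = decomp_re_im[of x, folded h_def k_def]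
  have th: "cstar (T h) = T h" "cstar (T k) = T k" using positive_map_selfadj[OF lin pos] D by auto
  have "T (cstar x) = T h - scaleC \<i> (T k)" using D(4) clinearD[OF lin] by simp
  moreover have "T x = T h + scaleC \<i> (T k)" using D(1) clinearD[OF lin] by metis
  ultimately show ?thesis using th by (simp add: cstar_add cstar_scaleC scaleC_minus_left)
qed

lemma cmod_cis_minus_1: "cmod (cis a - 1) \<le> \<bar>a\<bar>"
proof -
  have "(cmod (cis a - 1))\<^sup>2 = (cos a - 1)\<^sup>2 + (sin a)\<^sup>2" by (simp add: cmod_power2)
  also have "\<dots> = 2 - 2 * cos a" using sin_cos_squared_add[of a] by (simp add: power2_eq_square algebra_simps)
  also have "cos a = 1 - 2 * sin (a/2) ^ 2" using cos_double_sin[of "a/2"] by simp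
  also have "2 - 2 * (1 - 2 * sin (a/2) ^ 2) = 4 * (sin (a/2))\<^sup>2" by simp
  also have "\<dots> \<le> 4 * (a/2)\<^sup>2"
  proof -
    have "(sin (a/2))\<^sup>2 \<le> (a/2)\<^sup>2" using abs_sin_x_le_abs_x[of "a/2"] abs_le_square_iff by blast
    then show ?thesis by simp
  qed
  also have "\<dots> = \<bar>a\<bar>\<^sup>2" by (simp add: power2_eq_square)
  finally show ?thesis using abs_ge_zero power2_le_imp_le by blast
qed

lemma resolvent_identity:
  fixes x :: "'a::cstar_algebra"
  assumes "cstar_invertible (1 - scaleC l x)" "cstar_invertible (1 - scaleC m x)"
  shows "inv_of (1 - scaleC l x) - inv_of (1 - scaleC m x) =
         scaleC (l - m) (inv_of (1 - scaleC l x) * x * inv_of (1 - scaleC m x))"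
proof -
  let ?A = "inv_of (1 - scaleC l x)" and ?B = "inv_of (1 - scaleC m x)"
  have a: "?A * (1 - scaleC l x) = 1" and b: "(1 - scaleC m x) * ?B = 1" using inv_of assms by auto
  have "?A - ?B = ?A * ((1 - scaleC m x) * ?B) - (?A * (1 - scaleC l x)) * ?B" using a b by simp
  also have "\<dots> = ?A * ((1 - scaleC m x) - (1 - scaleC l x)) * ?B" by (simp add: algebra_simps)
  also have "(1 - scaleC m x) - (1 - scaleC l x) = scaleC (l - m) x" by (simp add: scaleC_diff_left)
  finally show ?thesis by (simp add: mult.assoc)
qed

locale resolv =
  fixes x :: "'a::cstar_algebra"
  assumes H: "\<And>l. cmod l \<le> 1 \<Longrightarrow> cstar_invertible (1 - scaleC l x)"
begin

definition g where "g l = inv_of (1 - scaleC l x)"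

lemma g_res: "cmod l \<le> 1 \<Longrightarrow> cmod m \<le> 1 \<Longrightarrow> g l - g m = scaleC (l - m) (g l * x * g m)"
  unfolding g_def by (rule resolvent_identity) (auto intro: H)

lemma g_inv: "cmod l \<le> 1 \<Longrightarrow> g l * (1 - scaleC l x) = 1" "cmod l \<le> 1 \<Longrightarrow> (1 - scaleC l x) * g l = 1"
  unfolding g_def using inv_of H by auto

lemma norm_mult3: "norm (a * b * (c::'a)) \<le> norm a * norm b * norm c"
  by (meson mult_right_mono norm_ge_zero norm_mult_ineq order_trans)

lemma g_local:
  assumes "cmod l \<le> 1" "cmod m \<le> 1" "cmod (l - m) * norm (g m) * norm x \<le> 1/2"
  shows "norm (g l) \<le> 2 * norm (g m)"
proof -
  have eq: "g l = g m + scaleC (l - m) (g l * x * g m)" using g_res[OF assms(1,2)] by (simp add: algebra_simps)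
  have "norm (g l) \<le> norm (g m) + norm (scaleC (l - m) (g l * x * g m))"
    by (subst eq) (rule norm_triangle_ineq)
  also have "norm (scaleC (l - m) (g l * x * g m)) = cmod (l - m) * norm (g l * x * g m)" by (rule norm_scaleC)
  also have "\<dots> \<le> cmod (l - m) * (norm (g l) * norm x * norm (g m))"
    by (rule mult_left_mono[OF norm_mult3]) simp
  also have "\<dots> = norm (g l) * (cmod (l - m) * norm (g m) * norm x)" by (simp only: ac_simps)
  also have "\<dots> \<le> norm (g l) * (1/2)" by (rule mult_left_mono[OF assms(3)]) simp
  finally show ?thesis by simp
qed

lemma g_cont: "continuous_on (cball 0 1) (\<lambda>l. norm (g l))"
  unfolding continuous_on_iff
proof (intro ballI allI impI)
  fix m :: complex and e :: real
  assume m: "m \<in> cball 0 1" and e: "e > 0"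
  define G where "G = norm (g m)"
  define X where "X = norm x"
  have G: "G \<ge> 0" and X: "X \<ge> 0" by (auto simp: G_def X_def)
  define C where "C = (G + 1) * (X + 1)"
  have C: "C > 0" using G X by (simp add: C_def)
  have GX: "G * X \<le> C" unfolding C_def using G X by (simp add: algebra_simps)
  define d where "d = min (1 / (2 * C)) (e / (2 * C * (G + 1)))"
  have d: "d > 0" using C e G by (simp add: d_def)
  have d1: "d * C \<le> 1/2" using C by (simp add: d_def min_def field_simps)
  have K: "2 * C * (G + 1) > 0" using C G by simp
  have "d \<le> e / (2 * C * (G + 1))" unfolding d_def by simp
  then have d2: "d * (2 * C * (G + 1)) \<le> e" using K by (simp add: le_divide_eq)
  show "\<exists>d>0. \<forall>l\<in>cball 0 1. dist l m < d \<longrightarrow> dist (norm (g l)) (norm (g m)) < e"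
  proof (intro exI[of _ d] conjI ballI impI d)
    fix l assume l: "l \<in> cball 0 1" and dl: "dist l m < d"
    have lm: "cmod (l - m) < d" using dl by (simp add: dist_norm)
    have "cmod (l - m) * norm (g m) * norm x = cmod (l - m) * (G * X)" by (simp add: G_def X_def)
    also have "\<dots> \<le> d * C" using lm GX G X d by (intro mult_mono) auto
    also have "\<dots> \<le> 1/2" by (rule d1)
    finally have b: "norm (g l) \<le> 2 * G" unfolding G_def using l m by (intro g_local) auto
    have "dist (norm (g l)) (norm (g m)) \<le> norm (g l - g m)" by (simp add: dist_norm norm_triangle_ineq3)
    also have "\<dots> = cmod (l - m) * norm (g l * x * g m)" using g_res[of l m] l m by (simp add: norm_scaleC)
    also have "\<dots> \<le> cmod (l - m) * (norm (g l) * X * G)"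
      unfolding X_def G_def by (rule mult_left_mono[OF norm_mult3]) simp
    also have "norm (g l) * X * G \<le> (2 * G) * X * G" using b G X by (intro mult_right_mono) auto
    then have "cmod (l - m) * (norm (g l) * X * G) \<le> cmod (l - m) * ((2 * G) * X * G)"
      by (rule mult_left_mono) simp
    also have "(2 * G) * X * G \<le> 2 * C * (G + 1)"
    proof -
      have "(2 * G) * X * G = 2 * (G * X) * G" by (simp add: ac_simps)
      also have "\<dots> \<le> 2 * C * (G + 1)" using GX G C X by (intro mult_mono) auto
      finally show ?thesis .
    qed
    then have "cmod (l - m) * ((2 * G) * X * G) \<le> cmod (l - m) * (2 * C * (G + 1))"
      by (rule mult_left_mono) simp
    also have "\<dots> < d * (2 * C * (G + 1))" using lm C G by (intro mult_strict_right_mono) auto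
    also have "\<dots> \<le> e" by (rule d2)
    finally show "dist (norm (g l)) (norm (g m)) < e" .
  qed
qed

lemma g_bound: "\<exists>M\<ge>0. \<forall>l. cmod l \<le> 1 \<longrightarrow> norm (g l) \<le> M"
proof -
  obtain l0 where "l0 \<in> cball 0 1" "\<forall>l\<in>cball 0 1. norm (g l) \<le> norm (g l0)"
    using continuous_attains_sup[OF compact_cball _ g_cont] by fastforce
  then show ?thesis by (intro exI[of _ "norm (g l0)"]) auto
qed

definition M where "M = (SOME M. M \<ge> 0 \<and> (\<forall>l. cmod l \<le> 1 \<longrightarrow> norm (g l) \<le> M))"

lemma M: "M \<ge> 0" "cmod l \<le> 1 \<Longrightarrow> norm (g l) \<le> M"
  using someI_ex[OF g_bound] unfolding M_def by auto

definition L where "L = M * M * norm x + 1"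

lemma L_pos: "L > 0" unfolding L_def using M(1) by (simp add: add_nonneg_pos)

definition w :: "nat \<Rightarrow> complex" where "w k = cis (pi / 2^k)"

lemma w_norm[simp]: "cmod (w k) = 1" by (simp add: w_def)

lemma w_pow: "w k ^ (2^k) = -1"
proof -
  have "w k ^ (2^k) = cis (real (2^k) * (pi / 2^k))" unfolding w_def by (rule Complex.DeMoivre)
  also have "real (2^k) * (pi / 2^k) = pi" by simp
  finally show ?thesis by simp
qed

lemma w_close: "cmod (w k - 1) \<le> pi / 2^k"
  using cmod_cis_minus_1[of "pi / 2^k"] by (simp add: w_def)

primrec S :: "nat \<Rightarrow> complex \<Rightarrow> 'a" where
  "S 0 l = g l"
| "S (Suc k) l = scaleR (1/2) (S k l + S k (w k * l))"

lemma S_bound: "cmod l \<le> 1 \<Longrightarrow> norm (S k l) \<le> M"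
proof (induction k arbitrary: l)
  case 0 then show ?case by (simp add: M)
next
  case (Suc k)
  have "cmod (w k * l) \<le> 1" using Suc.prems by (simp add: norm_mult)
  then have "norm (S k l) \<le> M" "norm (S k (w k * l)) \<le> M" using Suc by auto
  then have "norm (S k l + S k (w k * l)) \<le> 2 * M" using norm_triangle_ineq[of "S k l" "S k (w k * l)"] by simp
  then show ?case by simp
qed

lemma S_lip: "cmod l \<le> 1 \<Longrightarrow> cmod m \<le> 1 \<Longrightarrow> norm (S k l - S k m) \<le> L * cmod (l - m)"
proof (induction k arbitrary: l m)
  case 0
  have "norm (S 0 l - S 0 m) = cmod (l - m) * norm (g l * x * g m)" using g_res[OF 0] by (simp add: norm_scaleC)
  also have "\<dots> \<le> cmod (l - m) * (norm (g l) * norm x * norm (g m))" by (rule mult_left_mono[OF norm_mult3]) simp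
  also have "\<dots> \<le> cmod (l - m) * L"
  proof (rule mult_left_mono)
    have "norm (g l) * norm x * norm (g m) \<le> M * norm x * M"
      using M(2)[OF 0(1)] M(2)[OF 0(2)] M(1) by (intro mult_mono) auto
    also have "\<dots> \<le> L" unfolding L_def by simp
    finally show "norm (g l) * norm x * norm (g m) \<le> L" .
  qed simp
  finally show ?case by (simp add: mult.commute)
next
  case (Suc k)
  have w1: "cmod (w k * l) \<le> 1" "cmod (w k * m) \<le> 1" using Suc.prems by (auto simp: norm_mult)
  have "cmod (w k * l - w k * m) = cmod (l - m)" by (simp add: norm_mult flip: right_diff_distrib)
  then have a: "norm (S k l - S k m) \<le> L * cmod (l - m)" "norm (S k (w k * l) - S k (w k * m)) \<le> L * cmod (l - m)"
    using Suc.IH[OF Suc.prems] Suc.IH[OF w1] by auto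
  have "S (Suc k) l - S (Suc k) m = scaleR (1/2) ((S k l - S k m) + (S k (w k * l) - S k (w k * m)))"
    by (simp add: algebra_simps)
  then have "norm (S (Suc k) l - S (Suc k) m) \<le> (1/2) * (norm (S k l - S k m) + norm (S k (w k * l) - S k (w k * m)))"
    by (simp add: norm_triangle_ineq)
  then show ?case using a by simp
qed

lemma S_step: assumes "cmod l \<le> 1" shows "norm (S (Suc k) l - S k l) \<le> L * pi / 2^(Suc k)"
proof -
  have w1: "cmod (w k * l) \<le> 1" using assms by (simp add: norm_mult)
  have "S (Suc k) l - S k l = scaleR (1/2) (S k (w k * l) - S k l)"
    using scaleR_add_left[of "1/2" "1/2" "S k l"] by (simp add: algebra_simps)
  then have "norm (S (Suc k) l - S k l) = (1/2) * norm (S k (w k * l) - S k l)" by simp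
  also have "\<dots> \<le> (1/2) * (L * cmod (w k * l - l))" using S_lip[OF w1 assms] by simp
  also have "w k * l - l = (w k - 1) * l" by (simp add: algebra_simps)
  then have "cmod (w k * l - l) = cmod (w k - 1) * cmod l" by (simp add: norm_mult)
  also have "\<dots> \<le> pi / 2^k" using w_close[of k] assms
    by (metis mult_left_le norm_ge_zero mult.commute mult_le_one order_trans mult_right_le_one_le mult_left_mono mult.right_neutral)
  finally have "norm (S (Suc k) l - S k l) \<le> (1/2) * (L * (pi / 2^k))" using L_pos by (simp add: mult_left_mono)
  then show ?thesis by simp
qed

lemma S_tail: assumes "cmod l \<le> 1" shows "norm (S (k + n) l - S k l) \<le> L * pi / 2^k"
proof -
  have "norm (S (k + n) l - S k l) \<le> L * pi / 2^k * (1 - 1 / 2^n)"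
  proof (induction n)
    case 0 then show ?case by simp
  next
    case (Suc n)
    have "norm (S (k + Suc n) l - S k l) \<le> norm (S (Suc (k + n)) l - S (k + n) l) + norm (S (k + n) l - S k l)"
      using norm_triangle_ineq[of "S (Suc (k + n)) l - S (k + n) l" "S (k + n) l - S k l"] by simp
    also have "\<dots> \<le> L * pi / 2^(Suc (k + n)) + L * pi / 2^k * (1 - 1 / 2^n)"
      using S_step[OF assms, of "k + n"] Suc.IH by simp
    also have "\<dots> = L * pi / 2^k * (1 - 1 / 2^Suc n)" by (simp add: field_simps power_add)
    finally show ?case .
  qed
  also have "\<dots> \<le> L * pi / 2^k * 1"
    using L_pos by (intro mult_left_mono) auto
  finally show ?thesis by simp
qed

lemma half_halfR: "scaleR (1/2) (y + y) = (y::'a)"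
  using scaleR_add_left[of "1/2" "1/2" y] by (simp add: scaleR_add_right)

lemma S_inv: "cmod l \<le> 1 \<Longrightarrow> S k l * (1 - scaleC (l^(2^k)) (x^(2^k))) = 1 \<and> (1 - scaleC (l^(2^k)) (x^(2^k))) * S k l = 1"
proof (induction k arbitrary: l)
  case 0 then show ?case using g_inv by simp
next
  case (Suc k)
  define N :: nat where "N = 2^k"
  define u where "u = scaleC (l^N) (x^N)"
  have w1: "cmod (w k * l) \<le> 1" using Suc.prems by (simp add: norm_mult)
  have "(w k * l)^N = - (l^N)" unfolding N_def by (simp add: power_mult_distrib w_pow)
  then have "scaleC ((w k * l)^N) (x^N) = - u" unfolding u_def by (simp add: scaleC_minus_left)
  then have B: "S k (w k * l) * (1 + u) = 1" "(1 + u) * S k (w k * l) = 1"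
    using Suc.IH[OF w1] by (simp_all add: N_def)
  have A: "S k l * (1 - u) = 1" "(1 - u) * S k l = 1" using Suc.IH[OF Suc.prems] by (simp_all add: u_def N_def)
  have uu: "scaleC (l^(2^Suc k)) (x^(2^Suc k)) = u * u" unfolding u_def N_def
    by (simp add: power_add[symmetric] mult_2)
  have f1: "1 - u * u = (1 - u) * (1 + u)" "1 - u * u = (1 + u) * (1 - u)" by (simp_all add: algebra_simps)
  have e1: "S k l * (1 - u * u) = 1 + u" unfolding f1(1) mult.assoc[symmetric] A(1) by simp
  have e2: "S k (w k * l) * (1 - u * u) = 1 - u" unfolding f1(2) mult.assoc[symmetric] B(1) by simp
  have e3: "(1 - u * u) * S k l = 1 + u" unfolding f1(2) mult.assoc A(2) by simp
  have e4: "(1 - u * u) * S k (w k * l) = 1 - u" unfolding f1(1) mult.assoc B(2) by simp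
  have s2: "(1 + u) + (1 - u) = (1::'a) + 1" by simp
  have r1: "S (Suc k) l * (1 - u * u) = 1"
  proof -
    have "S (Suc k) l * (1 - u * u) = scaleR (1/2) (S k l * (1 - u * u) + S k (w k * l) * (1 - u * u))"
      by (simp only: S.simps mult_scaleR_left distrib_right)
    also have "\<dots> = scaleR (1/2) (1 + 1)" by (simp only: e1 e2 s2)
    finally show ?thesis by (simp only: half_halfR)
  qed
  have r2: "(1 - u * u) * S (Suc k) l = 1"
  proof -
    have "(1 - u * u) * S (Suc k) l = scaleR (1/2) ((1 - u * u) * S k l + (1 - u * u) * S k (w k * l))"
      by (simp only: S.simps mult_scaleR_right distrib_left)
    also have "\<dots> = scaleR (1/2) (1 + 1)" by (simp only: e3 e4 s2)
    finally show ?thesis by (simp only: half_halfR)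
  qed
  show ?case using r1 r2 uu by simp
qed

end

lemma norm4: "norm (a + b - c + d) \<le> norm a + norm b + norm c + norm (d::'a::real_normed_vector)"
proof -
  have "norm (a + b - c + d) \<le> norm (a + b - c) + norm d" by (rule norm_triangle_ineq)
  moreover have "norm (a + b - c) \<le> norm (a + b) + norm c" by (rule norm_triangle_ineq4)
  moreover have "norm (a + b) \<le> norm a + norm b" by (rule norm_triangle_ineq)
  ultimately show ?thesis by simp
qed

lemma inv_close:
  fixes A v :: "'a::cstar_algebra"
  assumes "(1 - v) * A = 1" "norm v \<le> 1/2"
  shows "norm (A - 1) \<le> 2 * norm v"
proof -
  have nv: "norm v < 1" using assms(2) by simp
  have "A = inv_of (1 - v)" using inv_unique[OF assms(1) inv_of(2)[OF neumann(1)[OF nv]]] .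
  then have "norm (A - 1) \<le> norm v / (1 - norm v)" using neumann(3)[OF nv] by simp
  also have "\<dots> \<le> norm v / (1/2)" using assms(2) by (intro divide_left_mono) auto
  finally show ?thesis by simp
qed

lemma bound_from_close:
  fixes A v :: "'a::cstar_algebra"
  assumes "A * (1 - v) = 1" "norm (A - 1) \<le> 1/2"
  shows "norm v \<le> 3"
proof -
  define e where "e = 1 - A"
  have ne: "norm e \<le> 1/2" using assms(2) by (simp add: e_def norm_minus_commute)
  then have ne1: "norm e < 1" by simp
  have Ae: "A = 1 - e" by (simp add: e_def)
  have invA: "cstar_invertible A" using neumann(1)[OF ne1] Ae by simp
  have "1 - v = inv_of A" using inv_unique[OF assms(1) inv_of(2)[OF invA]] .
  then have "1 - v = inv_of (1 - e)" using Ae by simp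
  then have "norm (1 - v) \<le> 1 / (1 - norm e)" using neumann(2)[OF ne1] by simp
  also have "\<dots> \<le> 1 / (1/2)" using ne by (intro divide_left_mono) auto
  finally have "norm (1 - v) \<le> 2" by simp
  moreover have "norm v \<le> norm (1::'a) + norm (1 - v)" using norm_triangle_ineq4[of 1 "1 - v"] by simp
  ultimately show ?thesis by simp
qed

context resolv
begin

definition v :: "real \<Rightarrow> nat \<Rightarrow> 'a" where "v t k = scaleR (t^(2^k)) (x^(2^k))"

lemma S_real: assumes "0 \<le> t" "t \<le> 1"
  shows "S k (complex_of_real t) * (1 - v t k) = 1" "(1 - v t k) * S k (complex_of_real t) = 1"
proof -
  have "cmod (complex_of_real t) \<le> 1" using assms by simp
  moreover have "scaleC (complex_of_real t ^ 2^k) (x^2^k) = v t k"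
    unfolding v_def by (simp add: scaleC_real flip: of_real_power)
  ultimately show "S k (complex_of_real t) * (1 - v t k) = 1" "(1 - v t k) * S k (complex_of_real t) = 1"
    using S_inv[of "complex_of_real t" k] by auto
qed

lemma Q_step:
  assumes Q: "v t \<longlonglongrightarrow> 0" and t: "0 \<le> t" "t \<le> t'" "t' \<le> 1" and Lt: "L * (t' - t) \<le> 1/8"
  shows "eventually (\<lambda>k. norm (v t' k) \<le> 3) sequentially"
proof -
  have "(\<lambda>k. norm (v t k)) \<longlonglongrightarrow> 0" using Q by (simp add: tendsto_norm_zero)
  then have "eventually (\<lambda>k. norm (v t k) < 1/16) sequentially" by (rule order_tendstoD) simp
  then obtain K1 where K1: "\<And>k. k \<ge> K1 \<Longrightarrow> norm (v t k) < 1/16" by (auto simp: eventually_sequentially)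
  obtain K where K: "16 * L * pi < 2^K" using real_arch_pow[of 2 "16 * L * pi"] by auto
  have tail: "L * pi / 2^K \<le> 1/16" using K by (simp add: field_simps)
  have tc: "cmod (complex_of_real t) \<le> 1" "cmod (complex_of_real t') \<le> 1" using t by auto
  show ?thesis unfolding eventually_sequentially
  proof (intro exI[of _ "max K1 K"] allI impI)
    fix m assume m: "max K1 K \<le> m"
    then obtain n where mn: "m = K + n" by (metis le_Suc_ex max.bounded_iff)
    have c1: "norm (S m (complex_of_real t) - 1) \<le> 1/8"
    proof -
      have "norm (S m (complex_of_real t) - 1) \<le> 2 * norm (v t m)"
        using inv_close[OF S_real(2)[OF t(1) order_trans[OF t(2,3)]]] K1[of m] m by simp
      then show ?thesis using K1[of m] m by simp
    qed
    have c2: "norm (S m (complex_of_real t') - S K (complex_of_real t')) \<le> 1/16"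
      using order_trans[OF S_tail[OF tc(2), of K n] tail] mn by simp
    have c3: "norm (S m (complex_of_real t) - S K (complex_of_real t)) \<le> 1/16"
      using order_trans[OF S_tail[OF tc(1), of K n] tail] mn by simp
    have c4: "norm (S K (complex_of_real t') - S K (complex_of_real t)) \<le> 1/8"
    proof -
      have "norm (S K (complex_of_real t') - S K (complex_of_real t)) \<le> L * cmod (complex_of_real t' - complex_of_real t)"
        by (rule S_lip[OF tc(2) tc(1)])
      also have "cmod (complex_of_real t' - complex_of_real t) = t' - t" using t
        by (simp flip: of_real_diff)
      finally show ?thesis using Lt by simp
    qed
    have "S m (complex_of_real t') - 1 = (S m (complex_of_real t') - S K (complex_of_real t'))
       + (S K (complex_of_real t') - S K (complex_of_real t)) - (S m (complex_of_real t) - S K (complex_of_real t))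
       + (S m (complex_of_real t) - 1)" by (simp add: algebra_simps)
    then have "norm (S m (complex_of_real t') - 1) \<le> norm (S m (complex_of_real t') - S K (complex_of_real t'))
       + norm (S K (complex_of_real t') - S K (complex_of_real t)) + norm (S m (complex_of_real t) - S K (complex_of_real t))
       + norm (S m (complex_of_real t) - 1)"
      by (simp only: norm4)
    also have "\<dots> \<le> 1/2" using c1 c2 c3 c4 by simp
    finally show "norm (v t' m) \<le> 3"
      by (rule bound_from_close[OF S_real(1)[OF order_trans[OF t(1,2)] t(3)]])
  qed
qed

lemma Q_down:
  assumes ev: "eventually (\<lambda>k. norm (v t' k) \<le> 3) sequentially" and t: "0 \<le> t" "t < t'"
  shows "v t \<longlonglongrightarrow> 0"
proof -
  define r where "r = t / t'"
  have tp: "t' > 0" using t by simp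
  have r: "0 \<le> r" "r < 1" using t tp by (auto simp: r_def)
  have rk: "(\<lambda>k. r ^ k) \<longlonglongrightarrow> 0" using r by (intro LIMSEQ_power_zero) auto
  have "(\<lambda>k. 3 * r ^ k) \<longlonglongrightarrow> 0" using tendsto_mult_right_zero[OF rk, of 3] by simp
  moreover have "eventually (\<lambda>k. norm (v t k) \<le> 3 * r ^ k) sequentially"
    using ev
  proof eventually_elim
    case (elim k)
    have tt: "t = r * t'" using tp by (simp add: r_def)
    have "norm (v t k) = r ^ (2^k) * norm (v t' k)"
      unfolding v_def tt using r tp by (simp add: power_mult_distrib abs_mult)
    also have "\<dots> \<le> r ^ k * 3"
      using elim r by (intro mult_mono power_decreasing) (auto simp: less_imp_le)
    finally show ?case by simp
  qed
  ultimately show ?thesis by (rule Lim_null_comparison[rotated])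
qed

lemma v_zero: "v 0 \<longlonglongrightarrow> 0"
proof -
  have "v 0 = (\<lambda>k. 0)" unfolding v_def by (rule ext) simp
  then show ?thesis by simp
qed

lemma reach_one: "eventually (\<lambda>k. norm (x^(2^k)) \<le> 3) sequentially"
proof -
  define d where "d = 1 / (16 * L)"
  have d: "d > 0" "L * (2 * d) = 1/8" using L_pos by (auto simp: d_def)
  have claim: "\<forall>t. 0 \<le> t \<and> t < 1 \<and> t \<le> real n * d \<longrightarrow> v t \<longlonglongrightarrow> 0" for n
  proof (induction n)
    case 0 then show ?case using v_zero by auto
  next
    case (Suc n)
    show ?case
    proof (intro allI impI)
      fix t assume a: "0 \<le> t \<and> t < 1 \<and> t \<le> real (Suc n) * d"
      show "v t \<longlonglongrightarrow> 0"
      proof (cases "t \<le> real n * d")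
        case True then show ?thesis using Suc.IH a by auto
      next
        case False
        define t0 where "t0 = real n * d"
        define t' where "t' = min 1 (t0 + 2 * d)"
        have t0: "0 \<le> t0" "t0 < t" using False d by (auto simp: t0_def)
        have Q0: "v t0 \<longlonglongrightarrow> 0" using Suc.IH t0 a by (auto simp: t0_def)
        have "t \<le> t0 + d" using a by (simp add: t0_def algebra_simps)
        then have tt': "t < t'" using a d by (auto simp: t'_def)
        have "L * (t' - t0) \<le> L * (2 * d)" using L_pos by (intro mult_left_mono) (auto simp: t'_def)
        then have "L * (t' - t0) \<le> 1/8" using d by simp
        then have "eventually (\<lambda>k. norm (v t' k) \<le> 3) sequentially"
          using t0 tt' by (intro Q_step[OF Q0]) (auto simp: t'_def)
        then show ?thesis using Q_down a tt' by blast
      qed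
    qed
  qed
  define t1 where "t1 = max 0 (1 - 2 * d)"
  obtain n where n: "1 / d < real n" using reals_Archimedean2 by blast
  have "t1 \<le> real n * d" using n d by (auto simp: t1_def field_simps)
  then have Q1: "v t1 \<longlonglongrightarrow> 0" using claim[of n] d by (auto simp: t1_def)
  have "L * (1 - t1) \<le> L * (2 * d)" using L_pos by (intro mult_left_mono) (auto simp: t1_def)
  then have "eventually (\<lambda>k. norm (v 1 k) \<le> 3) sequentially"
    using d by (intro Q_step[OF Q1]) (auto simp: t1_def)
  then show ?thesis by (simp add: v_def)
qed

end

lemma cstar_power: "cstar (h ^ n) = (cstar h) ^ n" for h :: "'a::cstar_algebra"
  by (induction n) (auto simp: cstar_mult power_commutes)

lemma norm_pow2: assumes "cstar h = (h::'a::cstar_algebra)" shows "norm (h ^ (2^k)) = norm h ^ (2^k)"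
proof (induction k)
  case 0 then show ?case by simp
next
  case (Suc k)
  have sa: "cstar (h ^ 2^k) = h ^ 2^k" using assms by (simp add: cstar_power)
  have "h ^ 2^Suc k = h ^ 2^k * h ^ 2^k" by (simp add: power_add[symmetric] mult_2)
  then have "norm (h ^ 2^Suc k) = (norm (h ^ 2^k))\<^sup>2" using cstar_identity[of "h ^ 2^k"] sa by simp
  then show ?case using Suc.IH by (simp add: power_mult[symmetric] power2_eq_square mult_2 power_add)
qed

theorem selfadj_norm_le:
  fixes h :: "'a::cstar_algebra"
  assumes sa: "cstar h = h" and r: "r \<ge> 0" and sp: "\<And>z. z \<in> cstar_spectrum h \<Longrightarrow> cmod z \<le> r"
  shows "norm h \<le> r"
proof (rule ccontr)
  assume "\<not> norm h \<le> r"
  then have hr: "r < norm h" by simp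
  define \<rho> where "\<rho> = (r + norm h) / 2"
  have \<rho>: "r < \<rho>" "\<rho> < norm h" "\<rho> > 0" using hr r by (auto simp: \<rho>_def)
  define x where "x = scaleR (1/\<rho>) h"
  interpret resolv x
  proof
    fix l :: complex assume l: "cmod l \<le> 1"
    show "cstar_invertible (1 - scaleC l x)"
    proof (cases "l = 0")
      case True then show ?thesis by simp
    next
      case False
      have "cmod (complex_of_real \<rho> / l) = \<rho> / cmod l" using \<rho> by (simp add: norm_divide)
      also have "\<dots> \<ge> \<rho>" using l False \<rho> by (simp add: field_simps)
      finally have "complex_of_real \<rho> / l \<notin> cstar_spectrum h" using sp \<rho> by force
      then have inv: "cstar_invertible (h - scaleC (complex_of_real \<rho> / l) 1)" by (simp add: spec_iff)
      have "scaleC (- l / complex_of_real \<rho>) (h - scaleC (complex_of_real \<rho> / l) 1) = 1 - scaleC l x"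
        using False \<rho> by (simp add: x_def scaleC_diff_right scaleR_scaleC scaleC_minus_left field_simps)
      moreover have "- l / complex_of_real \<rho> \<noteq> 0" using False \<rho> by simp
      ultimately show ?thesis using invertible_scaleC[OF _ inv] by metis
    qed
  qed
  obtain K where K: "\<And>k. k \<ge> K \<Longrightarrow> norm (x^(2^k)) \<le> 3"
    using reach_one by (auto simp: eventually_sequentially)
  define q where "q = norm h / \<rho>"
  have q: "q > 1" using \<rho> by (simp add: q_def)
  have xs: "cstar x = x" using sa by (simp add: x_def)
  have nx: "norm x = q" using \<rho> by (simp add: x_def q_def)
  obtain k0 where k0: "3 < q ^ k0" using real_arch_pow[OF q] by blast
  define k where "k = max k0 K"
  have "q ^ k0 \<le> q ^ k" using q by (intro power_increasing) (auto simp: k_def)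
  also have "\<dots> \<le> q ^ (2^k)" using q by (intro power_increasing) (auto intro: less_imp_le)
  also have "\<dots> = norm (x^(2^k))" using norm_pow2[OF xs] nx by simp
  also have "\<dots> \<le> 3" using K by (simp add: k_def)
  finally show False using k0 by simp
qed

lemma positive_spec_le: assumes "cstar_positive (a::'a::cstar_algebra)" "z \<in> cstar_spectrum a"
  shows "Im z = 0" "0 \<le> Re z" "Re z \<le> norm a"
  using positiveD(2)[OF assms(1) assms(2)] spec_norm[OF assms(2)] abs_Re_le_cmod[of z] by auto

lemma spec_flip: "z \<in> cstar_spectrum (scaleR t 1 - a) \<Longrightarrow> complex_of_real t - z \<in> cstar_spectrum (a::'a::cstar_algebra)"
proof -
  assume z: "z \<in> cstar_spectrum (scaleR t 1 - a)"
  have "a - scaleC (complex_of_real t - z) 1 = - (scaleR t 1 - a - scaleC z 1)"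
    by (simp add: scaleC_diff_left scaleC_real)
  then have "cstar_invertible (a - scaleC (complex_of_real t - z) 1) \<longleftrightarrow> cstar_invertible (scaleR t 1 - a - scaleC z 1)"
    by (simp only: invertible_neg)
  then show ?thesis using z unfolding spec_iff by simp
qed

lemma positive_norm_char: assumes "cstar_positive (a::'a::cstar_algebra)" "norm a \<le> t"
  shows "norm (scaleR t 1 - a) \<le> t"
proof (rule selfadj_norm_le)
  show "cstar (scaleR t 1 - a) = scaleR t 1 - a" using positiveD(1)[OF assms(1)] by simp
  show "t \<ge> 0" using assms(2) norm_ge_zero order_trans by blast
  fix z assume "z \<in> cstar_spectrum (scaleR t 1 - a)"
  then have "complex_of_real t - z \<in> cstar_spectrum a" by (rule spec_flip)
  from positive_spec_le[OF assms(1) this] assms(2) have "Im z = 0" "0 \<le> Re z" "Re z \<le> t" by auto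
  then show "cmod z \<le> t" by (simp add: cmod_eq_Re)
qed

lemma positive_norm_charI: assumes "cstar a = (a::'a::cstar_algebra)" "norm (scaleR t 1 - a) \<le> t"
  shows "cstar_positive a"
proof (rule positiveI[OF assms(1)])
  fix z assume z: "z \<in> cstar_spectrum a"
  have "scaleR t 1 - a - scaleC (complex_of_real t - z) 1 = - (a - scaleC z 1)"
    by (simp add: scaleC_diff_left scaleC_real)
  then have "cstar_invertible (scaleR t 1 - a - scaleC (complex_of_real t - z) 1) \<longleftrightarrow> cstar_invertible (a - scaleC z 1)"
    by (simp only: invertible_neg)
  then have z': "complex_of_real t - z \<in> cstar_spectrum (scaleR t 1 - a)"
    using z unfolding spec_iff by simp
  have "cstar (scaleR t 1 - a) = scaleR t 1 - a" using assms(1) by simp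
  from selfadj_spec_real[OF this z'] spec_norm[OF z'] assms(2)
  have "Im z = 0" "cmod (complex_of_real t - z) \<le> t" by auto
  moreover have "\<bar>Re (complex_of_real t - z)\<bar> \<le> cmod (complex_of_real t - z)" by (rule abs_Re_le_cmod)
  ultimately show "Im z = 0 \<and> 0 \<le> Re z" by auto
qed

lemma positive_add: assumes "cstar_positive (a::'a::cstar_algebra)" "cstar_positive b"
  shows "cstar_positive (a + b)"
proof (rule positive_norm_charI[where t = "norm a + norm b"])
  show "cstar (a + b) = a + b" using positiveD(1)[OF assms(1)] positiveD(1)[OF assms(2)] by (simp add: cstar_add)
  have "scaleR (norm a + norm b) 1 - (a + b) = (scaleR (norm a) 1 - a) + (scaleR (norm b) 1 - b)"
    by (simp add: algebra_simps scaleR_add_left)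
  also have "norm \<dots> \<le> norm (scaleR (norm a) 1 - a) + norm (scaleR (norm b) 1 - b)" by (rule norm_triangle_ineq)
  also have "\<dots> \<le> norm a + norm b" using positive_norm_char[OF assms(1)] positive_norm_char[OF assms(2)]
    by (simp add: add_mono)
  finally show "norm (scaleR (norm a + norm b) 1 - (a + b)) \<le> norm a + norm b" .
qed

lemma positive_antisym: assumes "cstar_positive (a::'a::cstar_algebra)" "cstar_positive (- a)"
  shows "a = 0"
proof -
  have "norm a \<le> 0"
  proof (rule selfadj_norm_le[OF positiveD(1)[OF assms(1)]])
    fix z assume z: "z \<in> cstar_spectrum a"
    then have "- z \<in> cstar_spectrum (- a)" using spec_neg by blast
    then have "Im (- z) = 0 \<and> Re (- z) \<ge> 0" by (rule positiveD(2)[OF assms(2)])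
    then have "Im z = 0" "Re z \<ge> 0" "Re (- z) \<ge> 0" using positiveD(2)[OF assms(1) z] by auto
    then have "z = 0" by (simp add: complex_eq_iff)
    then show "cmod z \<le> 0" by simp
  qed simp
  then show ?thesis by simp
qed

definition proj :: "'a::cstar_algebra \<Rightarrow> bool" where "proj p \<longleftrightarrow> cstar p = p \<and> p * p = p"

lemma proj_compl: "proj p \<Longrightarrow> proj (1 - p)"
  unfolding proj_def by (simp add: algebra_simps)

lemma positive_unitary_conj:
  assumes "cstar_positive (a::'a::cstar_algebra)" "cstar u = u" "u * u = 1"
  shows "cstar_positive (u * a * u)"
proof (rule positiveI)
  show "cstar (u * a * u) = u * a * u" using assms positiveD(1)[OF assms(1)] by (simp add: cstar_mult mult.assoc)
  fix z assume z: "z \<in> cstar_spectrum (u * a * u)"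
  have eq: "u * a * u - scaleC z 1 = u * (a - scaleC z 1) * u" using assms(3)
    by (simp add: algebra_simps)
  have "z \<in> cstar_spectrum a"
  proof (rule ccontr)
    assume "z \<notin> cstar_spectrum a"
    then have "cstar_invertible (a - scaleC z 1)" by (simp add: spec_iff)
    moreover have "cstar_invertible u" using assms(3) by (intro invertibleI) auto
    ultimately have "cstar_invertible (u * (a - scaleC z 1) * u)" by (intro invertible_mult)
    then show False using z eq by (simp add: spec_iff)
  qed
  then show "Im z = 0 \<and> 0 \<le> Re z" using positiveD(2)[OF assms(1)] by blast
qed

lemma positive_pinch:
  assumes p: "proj p" and a: "cstar_positive (a::'a::cstar_algebra)"
  shows "cstar_positive (p * a * p + (1 - p) * a * (1 - p))"
proof -
  define u where "u = p - (1 - p)"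
  have pp: "cstar p = p" "p * p = p" using p by (auto simp: proj_def)
  have u: "cstar u = u" "u * u = 1" using pp by (auto simp: u_def algebra_simps cstar_add)
  have "a + u * a * u = scaleR 2 (p * a * p + (1 - p) * a * (1 - p))"
    using pp by (simp add: u_def algebra_simps scaleR_2)
  then have "p * a * p + (1 - p) * a * (1 - p) = scaleR (1/2) (a + u * a * u)" by simp
  moreover have "cstar_positive (a + u * a * u)" using positive_add[OF a positive_unitary_conj[OF a u]] .
  ultimately show ?thesis using positive_scale[of "a + u * a * u" "1/2"] by simp
qed

lemma ring_id4: "(y - W) * (c - V) = (y * c - W * c) - y * V + W * (V::'a::ring)"
  by (simp add: algebra_simps)

lemma idem_assoc: "p * p = p \<Longrightarrow> p * (p * x) = p * (x::'a::semigroup_mult)"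
  by (metis mult.assoc)

lemma proj_orth: "proj p \<Longrightarrow> p * (1 - p) = 0 \<and> (1 - p) * p = 0"
  unfolding proj_def by (simp add: algebra_simps)

lemma corner_inv:
  assumes p: "proj p" and c: "x * p = p * (x::'a::cstar_algebra)" and i: "cstar_invertible x"
  shows "(p * x * p) * (p * inv_of x * p) = p" "(p * inv_of x * p) * (p * x * p) = p"
proof -
  have pp: "p * p = p" using p by (simp add: proj_def)
  have ci: "inv_of x * p = p * inv_of x" by (rule inv_commute[OF i c])
  have "(p * x * p) * (p * inv_of x * p) = p * x * (p * p) * inv_of x * p" by (simp add: mult.assoc)
  also have "\<dots> = p * x * (p * inv_of x) * p" using pp by (simp add: mult.assoc)
  also have "\<dots> = p * x * (inv_of x * p) * p" using ci by simp
  also have "\<dots> = p * (x * inv_of x) * (p * p)" by (simp add: mult.assoc)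
  also have "\<dots> = p" using inv_of(1)[OF i] pp by simp
  finally show "(p * x * p) * (p * inv_of x * p) = p" .
  have "(p * inv_of x * p) * (p * x * p) = p * inv_of x * (p * p) * x * p" by (simp add: mult.assoc)
  also have "\<dots> = p * inv_of x * (p * x) * p" using pp by (simp add: mult.assoc)
  also have "\<dots> = p * inv_of x * (x * p) * p" using c by simp
  also have "\<dots> = p * (inv_of x * x) * (p * p)" by (simp add: mult.assoc)
  also have "\<dots> = p" using inv_of(2)[OF i] pp by simp
  finally show "(p * inv_of x * p) * (p * x * p) = p" .
qed

lemma corner_to_full:
  assumes p: "proj p" and y: "p * y = y" "y * (p::'a::cstar_algebra) = y" and w: "w \<noteq> 0"
    and c: "p * c = c" "c * p = c" and ci: "(y - scaleC w p) * c = p" "c * (y - scaleC w p) = p"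
  shows "cstar_invertible (y - scaleC w 1)"
proof (rule invertibleI)
  have pp: "p * p = p" using p by (simp add: proj_def)
  have y1: "y * (1 - p) = 0" "(1 - p) * y = 0" using y by (simp_all add: right_diff_distrib left_diff_distrib)
  have e1: "y * c - scaleC w c = p"
  proof -
    have "(y - scaleC w p) * c = y * c - scaleC w (p * c)" by (simp only: left_diff_distrib mult_scaleC_left')
    then show ?thesis using ci(1) c(1) by simp
  qed
  have e2: "c * y - scaleC w c = p"
  proof -
    have "c * (y - scaleC w p) = c * y - scaleC w (c * p)" by (simp only: right_diff_distrib mult_scaleC_right')
    then show ?thesis using ci(2) c(2) by simp
  qed
  have ww: "scaleC w (scaleC (inverse w) z) = z" "scaleC (inverse w) (scaleC w z) = z" for z :: 'a
    using w by simp_all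
  have "(y - scaleC w 1) * (c - scaleC (inverse w) (1 - p)) =
     (y * c - scaleC w 1 * c) - y * scaleC (inverse w) (1 - p) + scaleC w 1 * scaleC (inverse w) (1 - p)"
    by (rule ring_id4)
  also have "\<dots> = 1" using e1 y1 w by simp
  finally show "(y - scaleC w 1) * (c - scaleC (inverse w) (1 - p)) = 1" .
  have "(c - scaleC (inverse w) (1 - p)) * (y - scaleC w 1) =
     (c * y - scaleC (inverse w) (1 - p) * y) - c * scaleC w 1 + scaleC (inverse w) (1 - p) * scaleC w 1"
    by (rule ring_id4)
  also have "\<dots> = (c * y - scaleC w c) - scaleC (inverse w) ((1 - p) * y) + scaleC (inverse w * w) (1 - p)" by (simp add: mult.commute)
  also have "\<dots> = 1" using e2 y1 w by simp
  finally show "(c - scaleC (inverse w) (1 - p)) * (y - scaleC w 1) = 1" .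
qed

lemma positive_corner:
  assumes p: "proj p" and f: "p * f = f" "f * p = (f::'a::cstar_algebra)" and e: "p * e = 0" "e * p = 0"
    and pos: "cstar_positive (e + f)"
  shows "cstar_positive f"
proof (rule positiveI)
  have pp: "cstar p = p" "p * p = p" using p by (auto simp: proj_def)
  have sa: "cstar (e + f) = e + f" using positiveD(1)[OF pos] .
  have "p * (e + f) * p = f" using f e by (simp add: algebra_simps mult.assoc[symmetric])
  then have "f = p * (e + f) * p" by simp
  then show "cstar f = f" using sa pp by (metis cstar_mult mult.assoc)
  fix z assume z: "z \<in> cstar_spectrum f"
  show "Im z = 0 \<and> 0 \<le> Re z"
  proof (rule ccontr)
    assume nz: "\<not> (Im z = 0 \<and> 0 \<le> Re z)"
    then have z0: "z \<noteq> 0" by auto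
    have "z \<notin> cstar_spectrum (e + f)" using positiveD(2)[OF pos] nz by blast
    then have i: "cstar_invertible (e + f - scaleC z 1)" by (simp add: spec_iff)
    define x where "x = e + f - scaleC z 1"
    have xc: "x * p = p * x" using f e by (simp add: x_def algebra_simps)
    have pxp: "p * x * p = f - scaleC z p" using f e pp by (simp add: x_def algebra_simps mult.assoc)
    have "cstar_invertible (f - scaleC z 1)"
    proof (rule corner_to_full[OF p f z0])
      show "p * (p * inv_of x * p) = p * inv_of x * p" "p * inv_of x * p * p = p * inv_of x * p"
        using pp by (simp_all add: mult.assoc idem_assoc)
      show "(f - scaleC z p) * (p * inv_of x * p) = p" "p * inv_of x * p * (f - scaleC z p) = p"
        using corner_inv[OF p xc i[folded x_def]] pxp by simp_all
    qed
    then show False using z by (simp add: spec_iff)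
  qed
qed

lemma positive_compress:
  assumes p: "proj p" and a: "cstar_positive (a::'a::cstar_algebra)"
  shows "cstar_positive (p * a * p)"
proof -
  have pp: "cstar p = p" "p * p = p" using p by (auto simp: proj_def)
  have "cstar_positive ((1 - p) * a * (1 - p) + p * a * p)"
    using positive_pinch[OF p a] by (simp add: add.commute)
  moreover have "p * (p * a * p) = p * a * p" "p * a * p * p = p * a * p"
    using pp by (simp_all add: mult.assoc idem_assoc)
  moreover have "p * ((1 - p) * a * (1 - p)) = 0" "(1 - p) * a * (1 - p) * p = 0"
  proof -
    have o: "p * (1 - p) = 0" "(1 - p) * p = 0" using proj_orth[OF p] by auto
    have "p * ((1 - p) * a * (1 - p)) = (p * (1 - p)) * a * (1 - p)" by (simp only: mult.assoc)
    then show "p * ((1 - p) * a * (1 - p)) = 0" using o by simp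
    have "(1 - p) * a * (1 - p) * p = (1 - p) * a * ((1 - p) * p)" by (simp only: mult.assoc)
    then show "(1 - p) * a * (1 - p) * p = 0" using o by simp
  qed
  ultimately show ?thesis using positive_corner[OF p] by blast
qed

lemma ring_sq: "h * S = S * h \<Longrightarrow> (h - S) * (h + S) = h * h - S * (S::'a::ring)"
  by (simp add: algebra_simps)

lemma sq_pos: assumes sa: "cstar h = (h::'a::cstar_algebra)" shows "cstar_positive (h * h)"
proof (rule positiveI)
  show "cstar (h * h) = h * h" using sa by (simp add: cstar_mult)
  fix z assume z: "z \<in> cstar_spectrum (h * h)"
  show "Im z = 0 \<and> 0 \<le> Re z"
  proof (rule ccontr)
    assume nz: "\<not> (Im z = 0 \<and> 0 \<le> Re z)"
    define s where "s = csqrt z"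
    have ss: "s * s = z" unfolding s_def using power2_csqrt[of z] by (simp add: power2_eq_square)
    have ims: "Im s \<noteq> 0"
    proof
      assume "Im s = 0"
      then have "z = complex_of_real ((Re s)\<^sup>2)" using ss by (simp add: complex_eq_iff power2_eq_square)
      then show False using nz by simp
    qed
    have n1: "s \<notin> cstar_spectrum h" using selfadj_spec_real[OF sa] ims by blast
    have n2: "- s \<notin> cstar_spectrum h" using selfadj_spec_real[OF sa, of "- s"] ims by auto
    have i1: "cstar_invertible (h - scaleC s 1)" using n1 by (simp add: spec_iff)
    have i2: "cstar_invertible (h - scaleC (- s) 1)" using n2 by (simp add: spec_iff)
    have "(h - scaleC s 1) * (h + scaleC s 1) = h * h - scaleC s 1 * scaleC s 1"
      by (rule ring_sq) simp
    also have "\<dots> = h * h - scaleC z 1" using ss by simp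
    finally have "cstar_invertible (h * h - scaleC z 1)"
      using invertible_mult[OF i1 i2] by (simp add: scaleC_minus_left)
    then show False using z by (simp add: spec_iff)
  qed
qed

lemma jacobson_id:
  fixes x y u :: "'a::cstar_algebra"
  shows "(y * x - scaleC z 1) * (y * u * x - 1) = y * ((x * y - scaleC z 1) * u) * x - y * x + scaleC z 1"
    "(y * u * x - 1) * (y * x - scaleC z 1) = y * (u * (x * y - scaleC z 1)) * x - y * x + scaleC z 1"
  by (simp_all add: algebra_simps scaleC_diff_right mult.assoc)

lemma jacobson:
  fixes x y :: "'a::cstar_algebra"
  assumes z: "z \<noteq> 0" and i: "cstar_invertible (x * y - scaleC z 1)"
  shows "cstar_invertible (y * x - scaleC z 1)"
proof -
  define u where "u = inv_of (x * y - scaleC z 1)"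
  have u: "(x * y - scaleC z 1) * u = 1" "u * (x * y - scaleC z 1) = 1" using inv_of[OF i] by (auto simp: u_def)
  have a: "(y * x - scaleC z 1) * (y * u * x - 1) = scaleC z 1" using jacobson_id(1)[of y x z u] u by simp
  have b: "(y * u * x - 1) * (y * x - scaleC z 1) = scaleC z 1" using jacobson_id(2)[of y u x z] u by simp
  show ?thesis
  proof (rule invertibleI)
    show "(y * x - scaleC z 1) * scaleC (inverse z) (y * u * x - 1) = 1" using a z by simp
    show "scaleC (inverse z) (y * u * x - 1) * (y * x - scaleC z 1) = 1" using b z by simp
  qed
qed

lemma neg_xx_zero:
  fixes x :: "'a::cstar_algebra"
  assumes pos: "cstar_positive (- (cstar x * x))"
  shows "x = 0"
proof -
  have p2: "cstar_positive (- (x * cstar x))"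
  proof (rule positiveI)
    show "cstar (- (x * cstar x)) = - (x * cstar x)" by (simp add: cstar_mult)
    fix z assume z: "z \<in> cstar_spectrum (- (x * cstar x))"
    show "Im z = 0 \<and> 0 \<le> Re z"
    proof (cases "z = 0")
      case True then show ?thesis by simp
    next
      case False
      have "- z \<in> cstar_spectrum (x * cstar x)" using z spec_neg[of "- z" "x * cstar x"] by simp
      then have "- z \<in> cstar_spectrum (cstar x * x)"
        using jacobson[of "- z" "cstar x" x] False by (auto simp: spec_iff)
      then have "z \<in> cstar_spectrum (- (cstar x * x))" using spec_neg[of "- z" "cstar x * x"] by simp
      then show ?thesis using positiveD(2)[OF pos] by blast
    qed
  qed
  define h where "h = scaleR (1/2) (x + cstar x)"
  define k where "k = scaleC (- \<i>/2) (x - cstar x)"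
  note D = decomp_re_im[of x, folded h_def k_def]
  define K where "K = scaleC \<i> k"
  have KK: "K * K = - (k * k)" unfolding K_def using scaleC_minus_left[of 1 "k * k"] by simp
  have "cstar x * x + x * cstar x = (h - K) * (h + K) + (h + K) * (h - K)"
    using D by (simp add: K_def)
  also have "\<dots> = scaleR 2 (h * h) - scaleR 2 (K * K)" by (simp add: algebra_simps scaleR_2)
  also have "\<dots> = scaleR 2 (h * h + k * k)" using KK by (simp add: algebra_simps)
  finally have sum: "cstar x * x + x * cstar x = scaleR 2 (h * h + k * k)" .
  have "cstar_positive (scaleR 2 (h * h + k * k))"
    using positive_scale[OF positive_add[OF sq_pos[OF D(2)] sq_pos[OF D(3)]], of 2] by simp
  then have "cstar_positive (scaleR 2 (h * h + k * k) + - (cstar x * x))" using positive_add pos by blast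
  moreover have "scaleR 2 (h * h + k * k) + - (cstar x * x) = x * cstar x" using sum by (simp add: algebra_simps)
  ultimately have "cstar_positive (x * cstar x)" by simp
  then have "x * cstar x = 0" using positive_antisym p2 by blast
  then have "(norm (cstar x))\<^sup>2 = 0" using cstar_identity[of "cstar x"] by simp
  then show ?thesis by simp
qed

lemma quad_pos:
  fixes c :: "'a::cstar_algebra"
  assumes pc: "cstar_positive c" and nc: "norm c \<le> 1"
  shows "cstar_positive (c - c * c)"
proof (rule positiveI)
  have sa: "cstar c = c" using positiveD(1)[OF pc] .
  show "cstar (c - c * c) = c - c * c" using sa by (simp add: cstar_mult)
  fix z assume z: "z \<in> cstar_spectrum (c - c * c)"
  show "Im z = 0 \<and> 0 \<le> Re z"
  proof (rule ccontr)
    assume nz: "\<not> (Im z = 0 \<and> 0 \<le> Re z)"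
    define r where "r = csqrt (1 - 4 * z)"
    define m1 where "m1 = (1 + r) / 2"
    define m2 where "m2 = (1 - r) / 2"
    have rr: "r * r = 1 - 4 * z" unfolding r_def using power2_csqrt[of "1 - 4 * z"] by (simp add: power2_eq_square)
    have s: "m1 + m2 = 1" by (simp add: m1_def m2_def field_simps)
    have pr: "m1 * m2 = z" unfolding m1_def m2_def using rr by (simp add: field_simps)
    have notin: "m \<notin> cstar_spectrum c" if "m1 = m \<or> m2 = m" for m
    proof
      assume m: "m \<in> cstar_spectrum c"
      have "Im m = 0" "0 \<le> Re m" "Re m \<le> 1" using positive_spec_le[OF pc m] nc by auto
      moreover have "z = m * (1 - m)"
      proof -
        have m2: "m2 = 1 - m1" using s by (simp add: algebra_simps)
        show ?thesis using that
        proof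
          assume "m1 = m" then show ?thesis using pr m2 by simp
        next
          assume e: "m2 = m"
          then have "m1 = 1 - m" using s by (simp add: algebra_simps)
          then show ?thesis using pr e by (simp add: mult.commute)
        qed
      qed
      ultimately have "Im z = 0" "Re z = Re m * (1 - Re m)" by simp_all
      moreover have "Re m * (1 - Re m) \<ge> 0" using \<open>0 \<le> Re m\<close> \<open>Re m \<le> 1\<close> by simp
      ultimately show False using nz by simp
    qed
    have i1: "cstar_invertible (c - scaleC m1 1)" using notin[of m1] by (simp add: spec_iff)
    have i2: "cstar_invertible (c - scaleC m2 1)" using notin[of m2] by (simp add: spec_iff)
    have ri: "(c - A) * (c - B) = c * c - (c * B + A * c) + A * (B::'a)" for A B by (simp add: algebra_simps)
    have "(c - scaleC m1 1) * (c - scaleC m2 1) = c * c - (scaleC m2 c + scaleC m1 c) + scaleC (m1 * m2) 1"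
      unfolding ri by (simp add: mult.commute)
    also have "scaleC m2 c + scaleC m1 c = scaleC (m1 + m2) c" by (simp add: scaleC_add_left add.commute)
    finally have "(c - scaleC m1 1) * (c - scaleC m2 1) = c * c - scaleC (m1 + m2) c + scaleC (m1 * m2) 1" .
    also have "\<dots> = - (c - c * c - scaleC z 1)" using s pr by simp
    finally have "cstar_invertible (- (c - c * c - scaleC z 1))" using invertible_mult[OF i1 i2] by simp
    then have "cstar_invertible (c - c * c - scaleC z 1)" by (simp only: invertible_neg)
    then show False using z by (simp add: spec_iff)
  qed
qed

lemma proj_facts:
  assumes "proj p"
  shows "cstar p = p" "p * p = p" "p * (1 - p) = 0" "(1 - p) * p = 0" "(1 - p) * (1 - p) = 1 - p"
    "cstar (1 - p) = 1 - p"
  using assms proj_orth[OF assms] proj_compl[OF assms] unfolding proj_def by auto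

lemma F1:
  fixes a b p :: "'a::cstar_algebra"
  assumes p: "proj p" and b: "p * b = b" "b * p = b" and pa: "cstar_positive a" and pba: "cstar_positive (b - a)"
  shows "(1 - p) * a * (1 - p) = 0"
proof -
  define q where "q = 1 - p"
  have q: "proj q" using proj_compl[OF p] by (simp add: q_def)
  have qb: "q * b = 0" "b * q = 0" using b by (simp_all add: q_def algebra_simps)
  have "q * (b - a) * q = - (q * a * q)" using qb by (simp add: algebra_simps mult.assoc)
  then have "cstar_positive (- (q * a * q))" using positive_compress[OF q pba] by simp
  moreover have "cstar_positive (q * a * q)" using positive_compress[OF q pa] .
  ultimately show ?thesis using positive_antisym q_def by blast
qed

lemma F3:
  fixes a q :: "'a::cstar_algebra"
  assumes q: "proj q" and pa: "cstar_positive a" and qaq: "q * a * q = 0"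
  shows "a * q = 0"
proof (cases "a = 0")
  case True then show ?thesis by simp
next
  case False
  define t where "t = norm a"
  have t: "t > 0" using False by (simp add: t_def)
  define a' where "a' = scaleR (1/t) a"
  have pa': "cstar_positive a'" unfolding a'_def using positive_scale[OF pa, of "1/t"] t by simp
  have na': "norm a' = 1" using t by (simp add: a'_def t_def)
  define c where "c = 1 - a'"
  have sac: "cstar c = c" using positiveD(1)[OF pa'] by (simp add: c_def)
  have pc: "cstar_positive c"
    by (rule positive_norm_charI[where t = 1, OF sac]) (simp add: c_def na')
  have nc: "norm c \<le> 1" using positive_norm_char[OF pa', of 1] na' by (simp add: c_def)
  have pcc: "cstar_positive (c - c * c)" by (rule quad_pos[OF pc nc])
  define p where "p = 1 - q"
  have Q: "cstar q = q" "q * q = q" "q * p = 0" "p * q = 0" "p * p = p" "cstar p = p" "p + q = 1"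
    using proj_facts[OF q] by (auto simp: p_def)
  have qcq: "q * c * q = q" unfolding c_def a'_def using qaq Q(2) by (simp add: algebra_simps)
  define X where "X = p * c * q"
  have cX: "cstar X = q * c * p" using Q sac by (simp add: X_def cstar_mult mult.assoc)
  have "q * (c * c) * q = q * c * (p + q) * c * q" using Q(7) by (simp add: mult.assoc)
  also have "\<dots> = (q * c * p) * (p * c * q) + (q * c * q) * (q * c * q)"
    using Q(2) Q(5) by (simp add: algebra_simps mult.assoc idem_assoc)
  also have "\<dots> = cstar X * X + q" using qcq cX Q(2) by (simp add: X_def)
  finally have qccq: "q * (c * c) * q = cstar X * X + q" .
  have "q * (c - c * c) * q = q * c * q - q * (c * c) * q" by (simp add: algebra_simps)
  also have "\<dots> = - (cstar X * X)" using qcq qccq by simp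
  finally have "cstar_positive (- (cstar X * X))" using positive_compress[OF q pcc] by simp
  then have X0: "X = 0" by (rule neg_xx_zero)
  have "c * q = (p + q) * c * q" using Q(7) by simp
  also have "\<dots> = X + q * c * q" by (simp add: X_def algebra_simps)
  also have "\<dots> = q" using X0 qcq by simp
  finally have cq: "c * q = q" .
  have "a = scaleR t (1 - c)" using t by (simp add: c_def a'_def)
  then have "a * q = scaleR t ((1 - c) * q)" by simp
  then have "a * q = scaleR t (q - c * q)" by (simp add: left_diff_distrib)
  then show ?thesis using cq by simp
qed

lemma herd:
  fixes a b p :: "'a::cstar_algebra"
  assumes p: "proj p" and b: "p * b = b" "b * p = b" and pa: "cstar_positive a" and pba: "cstar_positive (b - a)"
  shows "p * a * p = a"
proof -
  have q: "proj (1 - p)" by (rule proj_compl[OF p])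
  have aq: "a * (1 - p) = 0" by (rule F3[OF q pa F1[OF p b pa pba]])
  have qa: "(1 - p) * a = 0"
  proof -
    have "cstar (a * (1 - p)) = (1 - p) * a" using positiveD(1)[OF pa] proj_facts[OF p] by (simp add: cstar_mult)
    then show ?thesis using aq by simp
  qed
  have "a * p = a" using aq by (simp add: algebra_simps)
  moreover have "p * a = a" using qa by (simp add: algebra_simps)
  ultimately show ?thesis by (simp add: mult.assoc)
qed

locale stare =
  fixes d :: "'a::cstar_algebra \<Rightarrow> 'a"
  assumes SE: "star_endomorphism d"
begin

lemma d_lin: "clinear_map d" using SE by (simp add: star_endomorphism_def)
lemma d_mult: "d (x * y) = d x * d y" using SE by (simp add: star_endomorphism_def)
lemma d_cstar: "d (cstar x) = cstar (d x)" using SE by (simp add: star_endomorphism_def)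
lemmas d_ops = clinearD[OF d_lin]

lemma p_proj: "proj (d 1)"
  unfolding proj_def using d_cstar[of 1] d_mult[of 1 1] by simp

lemma p_left: "d 1 * d x = d x" using d_mult[of 1 x] by simp
lemma p_right: "d x * d 1 = d x" using d_mult[of x 1] by simp

lemma transfer_basic:
  assumes T: "transfer_operator d T"
  shows "clinear_map T" "\<And>x. T (cstar x) = cstar (T x)" "\<And>a b. T (d a * b) = a * T b"
    "\<And>a. T (d a) = a * T 1" "\<And>a. a * T 1 = T 1 * a" "cstar (T 1) = T 1" "\<And>a b. T (b * d a) = T b * a"
    "\<And>a. T (d 1 * a * d 1) = T a"
proof -
  show lin: "clinear_map T" using T by (simp add: transfer_operator_def)
  have pos: "\<forall>a. cstar_positive a \<longrightarrow> cstar_positive (T a)" using T by (simp add: transfer_operator_def)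
  show cs: "\<And>x. T (cstar x) = cstar (T x)" by (rule positive_map_cstar[OF lin pos])
  show tr: "\<And>a b. T (d a * b) = a * T b" using T by (simp add: transfer_operator_def)
  show td: "\<And>a. T (d a) = a * T 1" using tr[of _ 1] by simp
  show P: "cstar (T 1) = T 1" using cs[of 1] by simp
  have c1: "cstar a * T 1 = T 1 * cstar a" for a
  proof -
    have "cstar a * T 1 = T (d (cstar a))" using td by simp
    also have "\<dots> = cstar (T (d a))" using cs d_cstar by simp
    also have "\<dots> = T 1 * cstar a" using td P by (simp add: cstar_mult)
    finally show ?thesis .
  qed
  show "\<And>a. a * T 1 = T 1 * a"
  proof -
    fix a
    show "a * T 1 = T 1 * a" using c1[of "cstar a"] by simp
  qed
  show tr2: "\<And>a b. T (b * d a) = T b * a"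
  proof -
    fix a b
    have "T (b * d a) = cstar (T (cstar (b * d a)))" using cs by simp
    also have "cstar (b * d a) = d (cstar a) * cstar b" by (simp add: cstar_mult d_cstar)
    also have "cstar (T (d (cstar a) * cstar b)) = T b * a" using tr cs by (simp add: cstar_mult)
    finally show "T (b * d a) = T b * a" .
  qed
  show "\<And>a. T (d 1 * a * d 1) = T a" using tr tr2 by simp
qed

lemma nondeg_cond3i:
  assumes N: "nondegenerate_transfer_operator d T"
  shows "cond3i d (T 1)"
proof -
  have T: "transfer_operator d T" and dP: "d (T 1) = d 1" using N by (auto simp: nondegenerate_transfer_operator_def)
  note B = transfer_basic[OF T]
  define P where "P = T 1"
  have cen: "\<forall>a. P * a = a * P"
  proof
    fix a show "P * a = a * P" using B(5)[of a] unfolding P_def by simp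
  qed
  have PP: "P * P = P"
  proof -
    have "P * P = T (d P)" using B(4) by (simp add: P_def)
    also have "\<dots> = T (d 1)" using dP by (simp add: P_def)
    also have "\<dots> = P" using B(4)[of 1] by (simp add: P_def)
    finally show ?thesis .
  qed
  have dPa: "d (P * a) = d a" for a
  proof -
    have "d (P * a) = d P * d a" by (rule d_mult)
    also have "d P = d 1" using dP by (simp add: P_def)
    finally show ?thesis using p_left by simp
  qed
  have inj: "inj_on d (range (\<lambda>a. P * a))"
  proof (rule inj_onI)
    fix u v assume u: "u \<in> range (\<lambda>a. P * a)" and v: "v \<in> range (\<lambda>a. P * a)" and e: "d u = d v"
    obtain a b where ab: "u = P * a" "v = P * b" using u v by auto
    have "d a = d b" using e ab dPa by simp
    then have "T (d a) = T (d b)" by simp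
    then have "a * P = b * P" using B(4) by (simp add: P_def)
    then show "u = v" using ab cen by simp
  qed
  have img: "d ` range (\<lambda>a. P * a) = range d"
  proof
    show "d ` range (\<lambda>a. P * a) \<subseteq> range d" by auto
    show "range d \<subseteq> d ` range (\<lambda>a. P * a)"
    proof
      fix y assume "y \<in> range d"
      then obtain a where "y = d a" by auto
      then have "y = d (P * a)" using dPa by simp
      then show "y \<in> d ` range (\<lambda>a. P * a)" by blast
    qed
  qed
  have cs: "cstar P = P" and dP1: "d P = d 1" using B(6) dP by (simp_all add: P_def)
  have "cond3i d P" unfolding cond3i_def central_projection_def bij_betw_def
    by (intro conjI) (fact cs dP1 PP cen inj img)+
  then show ?thesis by (simp add: P_def)
qed

lemma cond3i_unique:
  assumes A: "cond3i d P" and B: "cond3i d P'"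
  shows "P = P'"
proof -
  have half: "Q * (1 - Q') = 0" if A: "cond3i d Q" and B: "cond3i d Q'" for Q Q'
  proof -
    have dq: "d Q = d 1" "d Q' = d 1" and inj: "inj_on d (range (\<lambda>a. Q * a))"
      using A B unfolding cond3i_def bij_betw_def by blast+
    have "d (Q * (1 - Q')) = d 1 * (d 1 - d 1)" using dq by (simp add: d_mult d_ops)
    also have "\<dots> = d (Q * 0)" by (simp add: d_ops)
    finally have eq: "d (Q * (1 - Q')) = d (Q * 0)" .
    have m1: "Q * (1 - Q') \<in> range (\<lambda>a. Q * a)" by (rule rangeI)
    have m2: "Q * 0 \<in> range (\<lambda>a. Q * a)" by (rule rangeI)
    have "Q * (1 - Q') = Q * 0" by (rule inj_onD[OF inj eq m1 m2])
    then show ?thesis by simp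
  qed
  have cen: "\<forall>a. P * a = a * P" using A unfolding cond3i_def central_projection_def by blast
  have e1: "P = P * P'" using half[OF A B] by (simp only: right_diff_distrib mult_1_right right_minus_eq)
  have e2: "P' = P' * P" using half[OF B A] by (simp only: right_diff_distrib mult_1_right right_minus_eq)
  from cen(1) have c: "P * P' = P' * P" by (rule spec)
  show ?thesis by (rule trans[OF e1 trans[OF c e2[symmetric]]])
qed

lemma complete_is_nondeg: "complete_transfer_operator d T \<Longrightarrow> nondegenerate_transfer_operator d T"
  unfolding complete_transfer_operator_def nondegenerate_transfer_operator_def
  using p_right[of 1] by simp

lemma complete_formula:
  assumes C: "complete_transfer_operator d T" and P: "cond3i d P"
  shows "P = T 1" "\<And>a. T a = the_inv_into (range (\<lambda>x. P * x)) d (d 1 * a * d 1)"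
proof -
  have T: "transfer_operator d T" and dT: "\<And>a. d (T a) = d 1 * a * d 1"
    using C by (auto simp: complete_transfer_operator_def)
  have dP: "d P = d 1" and inj: "inj_on d (range (\<lambda>x. P * x))" using P unfolding cond3i_def bij_betw_def by blast+
  have tr: "T (d a * b) = a * T b" for a b using T by (simp add: transfer_operator_def)
  have inA: "T a \<in> range (\<lambda>x. P * x)" for a
  proof -
    have "T a = T (d 1 * a)" using tr[of 1 a] by simp
    also have "\<dots> = P * T a" using tr[of P a] dP by simp
    finally show ?thesis by auto
  qed
  show "\<And>a. T a = the_inv_into (range (\<lambda>x. P * x)) d (d 1 * a * d 1)"
    using the_inv_into_f_f[OF inj inA] dT by simp
  have "d (T 1) = d (P * 1)" using dT dP p_left[of 1] by simp
  moreover have "P * 1 \<in> range (\<lambda>x. P * x)" by (rule rangeI)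
  ultimately have "P * 1 = T 1" using inj_onD[OF inj _ _ inA] by metis
  then show "P = T 1" by simp
qed

lemma complete_unique:
  assumes "complete_transfer_operator d T" "complete_transfer_operator d T'"
  shows "T = T'"
proof
  fix a
  obtain P where P: "cond3i d P" using nondeg_cond3i complete_is_nondeg assms(1) by blast
  show "T a = T' a"
    by (rule trans[OF complete_formula(2)[OF assms(1) P] complete_formula(2)[OF assms(2) P, symmetric]])
qed

lemma nondeg_unique:
  assumes C: "complete_transfer_operator d T" and N: "nondegenerate_transfer_operator d T'"
  shows "T' = T"
proof
  fix a
  have P: "cond3i d (T 1)" using nondeg_cond3i complete_is_nondeg C by blast
  have P': "cond3i d (T' 1)" using nondeg_cond3i N by blast
  have PP: "T' 1 = T 1" using cond3i_unique[OF P' P] .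
  have T: "transfer_operator d T" and dT: "d (T a) = d 1 * a * d 1"
    using C by (auto simp: complete_transfer_operator_def)
  have T': "transfer_operator d T'" using N by (simp add: nondegenerate_transfer_operator_def)
  note B' = transfer_basic[OF T'] and B = transfer_basic[OF T]
  have cT: "T 1 * T a = T a"
  proof -
    have "T a = T (d 1 * a)" using B(3)[of 1 a] by simp
    also have "\<dots> = T (d (T 1) * a)" using P unfolding cond3i_def by metis
    also have "\<dots> = T 1 * T a" using B(3) by simp
    finally show ?thesis by simp
  qed
  have "T' a = T' (d 1 * a * d 1)" using B'(8) by simp
  also have "\<dots> = T' (d (T a))" using dT by simp
  also have "\<dots> = T a * T' 1" using B'(4) by simp
  also have "\<dots> = T a" using PP B(5) cT by simp
  finally show "T' a = T a" .
qed

lemma complete_range: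
  assumes C: "complete_transfer_operator d T"
  shows "range d = {d 1 * a * d 1 | a. True}"
proof -
  have dT: "\<And>a. d (T a) = d 1 * a * d 1" using C by (auto simp: complete_transfer_operator_def)
  show ?thesis
  proof (intro set_eqI iffI)
    fix y assume "y \<in> range d"
    then obtain u where "y = d u" by auto
    then have "y = d 1 * y * d 1" using p_left p_right by simp
    then show "y \<in> {d 1 * a * d 1 | a. True}" by blast
  next
    fix y assume "y \<in> {d 1 * a * d 1 | a. True}"
    then obtain a where "y = d 1 * a * d 1" by auto
    then show "y \<in> range d" using dT[of a] by (metis rangeI)
  qed
qed

end

context stare
begin

lemma pp1: "d 1 * d 1 = d 1" using p_proj by (simp add: proj_def)

lemma corner_char: "d 1 * (d 1 * x * d 1) * d 1 = d 1 * x * d 1"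
  using pp1 by (simp add: mult.assoc idem_assoc)

lemma complete_hereditary:
  assumes C: "complete_transfer_operator d T"
  shows "hereditary_subalgebra (range d)"
proof -
  have R0: "range d = {d 1 * a * d 1 | a. True}" by (rule complete_range[OF C])
  have R: "range d = {x. d 1 * x * d 1 = x}"
  proof (intro set_eqI iffI)
    fix x assume "x \<in> range d"
    then obtain a where "x = d 1 * a * d 1" using R0 by blast
    then show "x \<in> {x. d 1 * x * d 1 = x}" using corner_char by simp
  next
    fix x assume "x \<in> {x. d 1 * x * d 1 = x}"
    then have "x = d 1 * x * d 1" by simp
    then show "x \<in> range d" using R0 by blast
  qed
  have cl: "closed (range d)" unfolding R
    by (intro closed_Collect_eq continuous_intros)
  have sub: "cstar_subalgebra (range d)"
    unfolding cstar_subalgebra_def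
  proof (intro conjI ballI allI cl)
    show "0 \<in> range d" using d_ops(5) by (metis rangeI)
    fix x y assume "x \<in> range d" "y \<in> range d"
    then obtain u v where uv: "x = d u" "y = d v" by auto
    show "x + y \<in> range d" using d_ops(1)[of u v] uv by (metis rangeI)
    show "x * y \<in> range d" using d_mult[of u v] uv by (metis rangeI)
  next
    fix c x assume "x \<in> range d"
    then obtain u where u: "x = d u" by auto
    show "scaleC c x \<in> range d" using d_ops(2)[of c u] u by (metis rangeI)
  next
    fix x assume "x \<in> range d"
    then obtain u where u: "x = d u" by auto
    show "cstar x \<in> range d" using d_cstar[of u] u by (metis rangeI)
  qed
  show ?thesis unfolding hereditary_subalgebra_def
  proof (intro conjI sub allI impI)
    fix a b assume H: "b \<in> range d \<and> cstar_positive a \<and> cstar_positive (b - a)"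
    then obtain u where u: "b = d u" by auto
    have "d 1 * a * d 1 = a" by (rule herd[OF p_proj _ _ conjunct1[OF conjunct2[OF H]] conjunct2[OF conjunct2[OF H]]])
      (simp_all add: u p_left p_right)
    then show "a \<in> range d" unfolding R by simp
  qed
qed

lemma hered_corner:
  assumes H: "hereditary_subalgebra (range d)"
  shows "d 1 * x * d 1 \<in> range d"
proof -
  define p where "p = d 1"
  have pp: "p * p = p" "cstar p = p" using p_proj by (auto simp: proj_def p_def)
  have Hh: "\<And>a b. b \<in> range d \<Longrightarrow> cstar_positive a \<Longrightarrow> cstar_positive (b - a) \<Longrightarrow> a \<in> range d"
    using H by (auto simp: hereditary_subalgebra_def)
  have sa_in: "h \<in> range d" if h: "cstar h = h" "p * h * p = h" for h
  proof -
    define c where "c = norm h"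
    have "cstar_positive (h + scaleR c 1)" by (rule positive_shift[OF h(1)]) (simp add: c_def)
    then have "cstar_positive (p * (h + scaleR c 1) * p)" using positive_compress[OF p_proj] by (simp add: p_def)
    moreover have "p * (h + scaleR c 1) * p = h + scaleR c p" using h(2) pp by (simp add: algebra_simps)
    ultimately have pa: "cstar_positive (h + scaleR c p)" by simp
    have "cstar_positive (- h + scaleR c 1)" by (rule positive_shift) (simp_all add: h c_def)
    then have "cstar_positive (p * (- h + scaleR c 1) * p)" using positive_compress[OF p_proj] by (simp add: p_def)
    moreover have "p * (- h + scaleR c 1) * p = scaleR (2 * c) p - (h + scaleR c p)" using h(2) pp
      by (simp add: algebra_simps scaleR_add_left[symmetric])
    ultimately have pba: "cstar_positive (scaleR (2 * c) p - (h + scaleR c p))" by simp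
    have bin: "scaleR (2 * c) p \<in> range d" unfolding p_def using d_ops(6)[of "2 * c" 1] by (metis rangeI)
    have "h + scaleR c p \<in> range d" by (rule Hh[OF bin pa pba])
    then obtain u where u: "h + scaleR c p = d u" by auto
    have "d (u - scaleR c 1) = d u - scaleR c (d 1)" using d_ops(4)[of u "scaleR c 1"] d_ops(6)[of c 1] by simp
    moreover have "d u - scaleR c (d 1) = h" using u unfolding p_def by (metis add_diff_cancel_right')
    ultimately have "h = d (u - scaleR c 1)" by simp
    then show ?thesis by (rule range_eqI)
  qed
  define y where "y = p * x * p"
  define h where "h = scaleR (1/2) (y + cstar y)"
  define k where "k = scaleC (- \<i>/2) (y - cstar y)"
  note D = decomp_re_im[of y, folded h_def k_def]
  have py: "p * y * p = y" unfolding y_def using pp by (simp add: mult.assoc idem_assoc)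
  have pcy: "p * cstar y * p = cstar y" using py pp by (metis cstar_mult mult.assoc)
  have "p * h * p = h" unfolding h_def using py pcy by (simp add: algebra_simps)
  then have hin: "h \<in> range d" using sa_in D(2) by blast
  have "p * k * p = k" unfolding k_def using py pcy by (simp add: algebra_simps scaleC_diff_right)
  then have kin: "k \<in> range d" using sa_in D(3) by blast
  then obtain kk where kk: "k = d kk" by auto
  obtain hh where hh: "h = d hh" using hin by auto
  have "y = d (hh + scaleC \<i> kk)" using D(1) hh kk d_ops(1,2) by simp
  then show ?thesis unfolding y_def p_def by (metis rangeI)
qed

lemma nondeg_hered_complete:
  assumes N: "nondegenerate_transfer_operator d T" and H: "hereditary_subalgebra (range d)"
  shows "complete_transfer_operator d T"
proof -
  have T: "transfer_operator d T" and dT1: "d (T 1) = d 1" using N by (auto simp: nondegenerate_transfer_operator_def)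
  note B = transfer_basic[OF T]
  have "d (T a) = d 1 * a * d 1" for a
  proof -
    obtain c where c: "d 1 * a * d 1 = d c" using hered_corner[OF H, of a] by auto
    have "T a = T (d 1 * a * d 1)" using B(8) by simp
    also have "\<dots> = c * T 1" using c B(4) by simp
    finally have "d (T a) = d c * d (T 1)" using d_mult by simp
    then show ?thesis using dT1 p_right c by simp
  qed
  then show ?thesis using T by (simp add: complete_transfer_operator_def)
qed

end

lemma norm_mult3g: "norm (a * b * (c::'a::real_normed_algebra)) \<le> norm a * norm b * norm c"
  by (meson mult_right_mono norm_ge_zero norm_mult_ineq order_trans)

context stare
begin

lemma norm_proj_le: assumes "proj p" shows "norm (p::'a) \<le> 1"
proof (rule ccontr)
  assume "\<not> norm p \<le> 1"
  then have g: "1 < norm p" by simp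
  have e: "(norm p)\<^sup>2 = norm p" using cstar_identity[of p] assms unfolding proj_def by metis
  have "norm p * 1 < norm p * norm p" using g by (intro mult_strict_left_mono) auto
  then show False using e g by (simp add: power2_eq_square)
qed

lemma cond3_complete:
  assumes P: "cond3i d P" and R0: "range d = {d 1 * a * d 1 | a. True}"
  shows "\<exists>T. complete_transfer_operator d T"
proof -
  define A where "A = range (\<lambda>x. P * x)"
  have C: "(cstar P = P \<and> P * P = P \<and> (\<forall>a. P * a = a * P)) \<and> d P = d 1 \<and> (inj_on d A \<and> d ` A = range d)"
    using P unfolding cond3i_def central_projection_def bij_betw_def A_def .
  have cen: "\<And>a. P * a = a * P" using C by blast
  have Psa: "cstar P = P" using C by blast
  have PP: "P * P = P" using C by blast
  have dP: "d P = d 1" using C by blast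
  have inj: "inj_on d A" using C by blast
  have img: "d ` A = range d" using C by blast
  have Pproj: "proj P" using Psa PP by (simp add: proj_def)
  have memA: "u \<in> A \<longleftrightarrow> P * u = u" for u
  proof
    assume "u \<in> A" then obtain x where "u = P * x" by (auto simp: A_def)
    then show "P * u = u" using PP by (simp add: mult.assoc[symmetric])
  next
    assume "P * u = u" then show "u \<in> A" unfolding A_def by (metis rangeI)
  qed
  have inR: "d 1 * a * d 1 \<in> d ` A" for a using R0 img by blast
  define T where "T a = the_inv_into A d (d 1 * a * d 1)" for a
  have TA: "T a \<in> A" for a unfolding T_def by (rule the_inv_into_into[OF inj inR]) simp
  have dT: "d (T a) = d 1 * a * d 1" for a unfolding T_def by (rule f_the_inv_into_f[OF inj inR])
  have Tu: "T a = u" if "u \<in> A" "d u = d 1 * a * d 1" for a u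
    unfolding T_def by (rule the_inv_into_f_eq[OF inj that(2) that(1)])
  have injA: "u = v" if "u \<in> A" "v \<in> A" "d u = d v" for u v using inj_onD[OF inj that(3) that(1,2)] .
  have lin: "clinear_map T" unfolding clinear_map_def
  proof (intro conjI allI)
    fix x y
    show "T (x + y) = T x + T y"
    proof (rule Tu)
      show "T x + T y \<in> A" using TA[of x] TA[of y] by (simp add: memA distrib_left)
      show "d (T x + T y) = d 1 * (x + y) * d 1" using dT d_ops(1) by (simp add: algebra_simps)
    qed
  next
    fix c x
    show "T (scaleC c x) = scaleC c (T x)"
    proof (rule Tu)
      show "scaleC c (T x) \<in> A" using TA[of x] by (simp add: memA)
      show "d (scaleC c (T x)) = d 1 * scaleC c x * d 1" using dT d_ops(2) by simp
    qed
  qed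
  note LT = clinearD[OF lin]
  have ctrans: "cstar_invertible (c - scaleC z 1)" if c: "c \<in> A" and z: "z \<noteq> 0"
    and i: "cstar_invertible (d c - scaleC z 1)" for c z
  proof -
    define p where "p = d 1"
    have pproj: "proj p" using p_proj by (simp add: p_def)
    have pp: "p * p = p" using pproj by (simp add: proj_def)
    have Pc: "P * c = c" "c * P = c" using c memA cen by auto
    have dc: "p * d c = d c" "d c * p = d c" using p_left p_right by (simp_all add: p_def)
    define x where "x = d c - scaleC z 1"
    have xc: "x * p = p * x" using dc by (simp add: x_def algebra_simps)
    have pxp: "p * x * p = d c - scaleC z p" using dc pp by (simp add: x_def algebra_simps mult.assoc)
    note CI = corner_inv[OF pproj xc i[folded x_def]]
    define V where "V = p * inv_of x * p"
    have "V \<in> range d" using R0 unfolding V_def p_def by blast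
    then have "V \<in> d ` A" using img by simp
    then obtain v where v: "v \<in> A" "d v = V" by (auto simp: image_iff)
    have Pv: "P * v = v" "v * P = v" using v(1) memA cen by auto
    have PA: "P \<in> A" using memA PP by simp
    have e1: "(c - scaleC z P) * v = P"
    proof (rule injA)
      have "P * (c - scaleC z P) = c - scaleC z P" using Pc PP by (simp add: right_diff_distrib)
      then show "(c - scaleC z P) * v \<in> A" unfolding memA by (simp add: mult.assoc[symmetric])
      show "P \<in> A" by (rule PA)
      have "d ((c - scaleC z P) * v) = (d c - scaleC z p) * V" using v dP d_mult d_ops by (simp add: p_def)
      also have "\<dots> = p" using CI(1) pxp by (simp add: V_def)
      finally show "d ((c - scaleC z P) * v) = d P" using dP by (simp add: p_def)
    qed
    have e2: "v * (c - scaleC z P) = P"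
    proof (rule injA)
      show "v * (c - scaleC z P) \<in> A" unfolding memA using Pv by (simp add: mult.assoc[symmetric])
      show "P \<in> A" by (rule PA)
      have "d (v * (c - scaleC z P)) = V * (d c - scaleC z p)" using v dP d_mult d_ops by (simp add: p_def)
      also have "\<dots> = p" using CI(2) pxp by (simp add: V_def)
      finally show "d (v * (c - scaleC z P)) = d P" using dP by (simp add: p_def)
    qed
    show ?thesis by (rule corner_to_full[OF Pproj Pc z Pv e1 e2])
  qed
  have pos: "cstar_positive (T a)" if a: "cstar_positive a" for a
  proof (rule positiveI)
    have py: "cstar_positive (d 1 * a * d 1)" by (rule positive_compress[OF p_proj a])
    have TP: "T a * P = T a" using TA[of a] cen[of "T a"] unfolding memA by simp
    have "P * cstar (T a) = cstar (T a * P)" using Psa by (simp add: cstar_mult)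
    then have cA: "cstar (T a) \<in> A" using TP unfolding memA by simp
    have "d (cstar (T a)) = d (T a)" using d_cstar dT positiveD(1)[OF py] by simp
    then show "cstar (T a) = T a" using injA[OF cA TA] by simp
    fix z assume z: "z \<in> cstar_spectrum (T a)"
    show "Im z = 0 \<and> 0 \<le> Re z"
    proof (rule ccontr)
      assume nz: "\<not> (Im z = 0 \<and> 0 \<le> Re z)"
      then have z0: "z \<noteq> 0" by auto
      have "z \<notin> cstar_spectrum (d (T a))" using positiveD(2)[OF py] nz dT by auto
      then have "cstar_invertible (d (T a) - scaleC z 1)" by (simp add: spec_iff)
      then have "cstar_invertible (T a - scaleC z 1)" by (rule ctrans[OF TA z0])
      then show False using z by (simp add: spec_iff)
    qed
  qed
  have iso: "norm c \<le> norm (d c)" if c: "c \<in> A" for c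
  proof -
    define h where "h = cstar c * c"
    have Pc: "P * c = c" using c memA by simp
    have "P * (cstar c * c) = (P * cstar c) * c" by (simp add: mult.assoc)
    also have "\<dots> = cstar c * (P * c)" using cen[of "cstar c"] by (simp add: mult.assoc)
    finally have hA: "h \<in> A" using Pc unfolding memA h_def by simp
    have hsa: "cstar h = h" by (simp add: h_def cstar_mult)
    have dh: "d h = cstar (d c) * d c" by (simp add: h_def d_mult d_cstar)
    have "norm h \<le> norm (d h)"
    proof (rule selfadj_norm_le[OF hsa])
      show "norm (d h) \<ge> 0" by simp
      fix z assume z: "z \<in> cstar_spectrum h"
      show "cmod z \<le> norm (d h)"
      proof (rule ccontr)
        assume "\<not> cmod z \<le> norm (d h)"
        then have lt: "norm (d h) < cmod z" by simp
        then have z0: "z \<noteq> 0" by auto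
        have "z \<notin> cstar_spectrum (d h)"
        proof
          assume "z \<in> cstar_spectrum (d h)"
          then have "cmod z \<le> norm (d h)" by (rule spec_norm)
          then show False using lt by simp
        qed
        then have "cstar_invertible (d h - scaleC z 1)" by (simp add: spec_iff)
        then have "cstar_invertible (h - scaleC z 1)" by (rule ctrans[OF hA z0])
        then show False using z by (simp add: spec_iff)
      qed
    qed
    moreover have "norm h = (norm c)\<^sup>2" unfolding h_def by (rule cstar_identity)
    moreover have "norm (d h) = (norm (d c))\<^sup>2" unfolding dh by (rule cstar_identity)
    ultimately have "(norm c)\<^sup>2 \<le> (norm (d c))\<^sup>2" by linarith
    then show ?thesis by (rule power2_le_imp_le) simp
  qed
  have bnd: "norm (T a) \<le> norm a" for a
  proof -
    have "norm (T a) \<le> norm (d 1 * a * d 1)" using iso[OF TA] dT by simp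
    also have "\<dots> \<le> norm (d 1) * norm a * norm (d 1)" by (rule norm_mult3g)
    also have "\<dots> \<le> 1 * norm a * 1" using norm_proj_le[OF p_proj] by (intro mult_mono) auto
    finally show ?thesis by simp
  qed
  have cont: "continuous_on UNIV T"
    unfolding continuous_on_iff
  proof (intro ballI allI impI)
    fix x :: 'a and e :: real assume "e > 0"
    then show "\<exists>d>0. \<forall>x'\<in>UNIV. dist x' x < d \<longrightarrow> dist (T x') (T x) < e"
    proof (intro exI[of _ e] conjI ballI impI)
      fix x' assume "dist x' x < e"
      moreover have "dist (T x') (T x) \<le> dist x' x" using bnd[of "x' - x"] LT(4) by (simp add: dist_norm)
      ultimately show "dist (T x') (T x) < e" by simp
    qed
  qed
  have tr: "T (d a * b) = a * T b" for a b
  proof (rule Tu)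
    have PT: "P * T b = T b" using TA[of b] memA by simp
    have "P * (a * T b) = (P * a) * T b" by (simp add: mult.assoc)
    also have "\<dots> = a * (P * T b)" using cen[of a] by (simp add: mult.assoc)
    finally show "a * T b \<in> A" using PT unfolding memA by simp
    have "d (a * T b) = (d a * d 1) * b * d 1" using dT[of b] d_mult[of a "T b"] by (simp add: mult.assoc)
    also have "\<dots> = (d 1 * d a) * b * d 1" using p_left[of a] p_right[of a] by simp
    finally show "d (a * T b) = d 1 * (d a * b) * d 1" by (simp add: mult.assoc)
  qed
  have "complete_transfer_operator d T"
    unfolding complete_transfer_operator_def transfer_operator_def
    using cont lin pos tr dT by blast
  then show ?thesis by blast
qed

end

theorem theorem1:
  fixes d :: "'a::cstar_algebra \<Rightarrow> 'a"
  assumes "star_endomorphism d"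
  shows "((\<exists>T. complete_transfer_operator d T) \<longleftrightarrow>
           ((\<exists>T. nondegenerate_transfer_operator d T) \<and> hereditary_subalgebra (range d)))
       \<and> ((\<exists>T. complete_transfer_operator d T) \<longleftrightarrow>
           ((\<exists>P. cond3i d P) \<and> range d = {d 1 * a * d 1 | a. True}))
       \<and> ((\<exists>T. complete_transfer_operator d T) \<longrightarrow>
           (\<exists>!T. complete_transfer_operator d T) \<and> (\<exists>!T. nondegenerate_transfer_operator d T)
           \<and> (\<exists>!P. cond3i d P)
           \<and> (\<forall>T P. complete_transfer_operator d T \<longrightarrow> cond3i d P \<longrightarrow>
                 P = T 1 \<and> (\<forall>a. T a = the_inv_into (range (\<lambda>x. P * x)) d (d 1 * a * d 1))))"
proof -
  interpret stare d by unfold_locales (rule assms)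
  have I1: "(\<exists>T. complete_transfer_operator d T) \<longleftrightarrow>
           ((\<exists>T. nondegenerate_transfer_operator d T) \<and> hereditary_subalgebra (range d))"
  proof
    assume "\<exists>T. complete_transfer_operator d T"
    then obtain T where C: "complete_transfer_operator d T" by blast
    show "(\<exists>T. nondegenerate_transfer_operator d T) \<and> hereditary_subalgebra (range d)"
      using complete_is_nondeg[OF C] complete_hereditary[OF C] by blast
  next
    assume "(\<exists>T. nondegenerate_transfer_operator d T) \<and> hereditary_subalgebra (range d)"
    then obtain T where N: "nondegenerate_transfer_operator d T" and H: "hereditary_subalgebra (range d)" by blast
    show "\<exists>T. complete_transfer_operator d T" using nondeg_hered_complete[OF N H] by blast
  qed
  have I2: "(\<exists>T. complete_transfer_operator d T) \<longleftrightarrow>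
           ((\<exists>P. cond3i d P) \<and> range d = {d 1 * a * d 1 | a. True})"
  proof
    assume "\<exists>T. complete_transfer_operator d T"
    then obtain T where C: "complete_transfer_operator d T" by blast
    show "(\<exists>P. cond3i d P) \<and> range d = {d 1 * a * d 1 | a. True}"
      using nondeg_cond3i[OF complete_is_nondeg[OF C]] complete_range[OF C] by blast
  next
    assume "(\<exists>P. cond3i d P) \<and> range d = {d 1 * a * d 1 | a. True}"
    then obtain P where P: "cond3i d P" and R: "range d = {d 1 * a * d 1 | a. True}" by blast
    show "\<exists>T. complete_transfer_operator d T" by (rule cond3_complete[OF P R])
  qed
  have I3: "(\<exists>T. complete_transfer_operator d T) \<longrightarrow>
           (\<exists>!T. complete_transfer_operator d T) \<and> (\<exists>!T. nondegenerate_transfer_operator d T)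
           \<and> (\<exists>!P. cond3i d P)
           \<and> (\<forall>T P. complete_transfer_operator d T \<longrightarrow> cond3i d P \<longrightarrow>
                 P = T 1 \<and> (\<forall>a. T a = the_inv_into (range (\<lambda>x. P * x)) d (d 1 * a * d 1)))"
  proof
    assume "\<exists>T. complete_transfer_operator d T"
    then obtain T where C: "complete_transfer_operator d T" by blast
    have u1: "\<exists>!T. complete_transfer_operator d T"
      using C complete_unique by blast
    have u2: "\<exists>!T. nondegenerate_transfer_operator d T"
    proof (rule ex1I[of _ T])
      show "nondegenerate_transfer_operator d T" by (rule complete_is_nondeg[OF C])
      fix T' assume "nondegenerate_transfer_operator d T'"
      then show "T' = T" by (rule nondeg_unique[OF C])
    qed
    have P1: "cond3i d (T 1)" by (rule nondeg_cond3i[OF complete_is_nondeg[OF C]])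
    have u3: "\<exists>!P. cond3i d P"
    proof (rule ex1I[of _ "T 1"])
      show "cond3i d (T 1)" by (rule P1)
      fix P assume "cond3i d P"
      then show "P = T 1" using cond3i_unique P1 by blast
    qed
    have f: "\<forall>T P. complete_transfer_operator d T \<longrightarrow> cond3i d P \<longrightarrow>
                 P = T 1 \<and> (\<forall>a. T a = the_inv_into (range (\<lambda>x. P * x)) d (d 1 * a * d 1))"
    proof (intro allI impI conjI)
      fix T' P assume C': "complete_transfer_operator d T'" and P: "cond3i d P"
      show "P = T' 1" by (rule complete_formula(1)[OF C' P])
      fix a show "T' a = the_inv_into (range (\<lambda>x. P * x)) d (d 1 * a * d 1)" by (rule complete_formula(2)[OF C' P])
    qed
    show "(\<exists>!T. complete_transfer_operator d T) \<and> (\<exists>!T. nondegenerate_transfer_operator d T)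
           \<and> (\<exists>!P. cond3i d P)
           \<and> (\<forall>T P. complete_transfer_operator d T \<longrightarrow> cond3i d P \<longrightarrow>
                 P = T 1 \<and> (\<forall>a. T a = the_inv_into (range (\<lambda>x. P * x)) d (d 1 * a * d 1)))"
      using u1 u2 u3 f by blast
  qed
  show ?thesis using I1 I2 I3 by blast
qed

end
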